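(* Let $R \ge 0$ and let $X$ be an $R$-rough geodesic metric space. The following conditions are equivalent. (1) $X$ is strongly shortcut. (2) There exists $L > 1$ such that there is a bound on the lengths $|S|$ of the Riemannian circles $S$ admitting an $(L,4R)$-quasi-isometric embedding $S \to X$. (3) There exists $L > 1$ such that for every $C \ge 0$ there is a bound on the lengths $|S|$ of the Riemannian circles $S$ admitting an $(L,C)$-quasi-isometric embedding $S \to X$. (4) $X$ does not approximate $n$-gons. (5) No asymptotic cone of $X$ contains an isometric copy of the Riemannian circle of unit length.
   Context: A Riemannian circle $S$ is a circle with its length (intrinsic) metric; $|S|$ denotes its length. For $R \ge 0$, a map $f\colon A \to B$ of metric spaces is an $R$-rough isometric embedding if $d(a,a') - R \le d(f(a),f(a')) \le d(a,a') + R$ for all $a,a'$. An $R$-rough geodesic from $x_1$ to $x_2$ is an $R$-rough isometric embedding $f\colon[0,\ell]\to X$ with $\ell = d(x_1,x_2)$, $f(0)=x_1$, $f(\ell)=x_2$; $X$ is $R$-rough geodesic if every pair of points is joined by an $R$-rough geodesic. An $R$-circle in $X$ is a map $\alpha\colon S\to X$ from a Riemannian circle with $d(\alpha(p),\alpha(q)) \le d_S(p,q) + R$ for all $p,q$. For $K>1$, an $R$-circle $\alpha$ is $\frac1K$-almost isometric if $d(\alpha(p),\alpha(\bar p)) \ge \frac1K\cdot\frac{|S|}{2}$ for every pair of antipodal points $p,\bar p\in S$. The $R$-rough geodesic space $X$ is strongly shortcut if for some $K>1$ there is a bound on the lengths $|S|$ of the $\frac1K$-almost isometric $R$-circles $\alpha\colon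 S\to X$. A map $f$ is an $(L,C)$-quasi-isometric embedding if $\frac1L d(a,a') - C \le d(f(a),f(a')) \le L d(a,a') + C$ for all $a,a'$. For $n\in\mathbb N$, $S_n$ is the cycle graph of length $n$ (a Riemannian circle of length $n$ with $n$ vertices equally spaced), $S_n^0$ its vertex set with the induced metric, and $\lambda S_n^0$ is $S_n^0$ with the metric multiplied by $\lambda>0$. A metric space $X$ approximates $n$-gons if for every $K>1$ and every $n\in\mathbb N$ there exist $K$-bilipschitz embeddings $\lambda S_n^0 \to X$ for arbitrarily large $\lambda>0$. Asymptotic cone: given a nonprincipal ultrafilter $\mathscr U$ on $\mathbb N$, a sequence $(b^{(m)})$ in $X$ and positive reals $s^{(m)}\to\infty$, consider sequences $(x_m)$ in $X$ with $d(x_m,b^{(m)})/s^{(m)}$ bounded, with pseudometric $\bar d((x_m),(x'_m)) = \lim_{\mathscr U} d(x_m,x'_m)/s^{(m)}$; the asymptotic cone is the associated metric quotient. *)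

theory Defs
  imports "HOL-Analysis.Analysis"
begin

text \<open>The Riemannian circle of length c > 0, modelled on the carrier {0..<c}
  with the intrinsic (arc-length) metric. Every Riemannian circle of length c
  is isometric to this model.\<close>

definition circle_pts :: "real \<Rightarrow> real set" where
  "circle_pts c = {0..<c}"

definition circle_dist :: "real \<Rightarrow> real \<Rightarrow> real \<Rightarrow> real" where
  "circle_dist c s t = min \<bar>s - t\<bar> (c - \<bar>s - t\<bar>)"

definition cycle_verts :: "nat \<Rightarrow> nat set" where
  "cycle_verts n = {0..<n}"

definition scaled_cycle_dist :: "real \<Rightarrow> nat \<Rightarrow> nat \<Rightarrow> nat \<Rightarrow> real" where
  "scaled_cycle_dist lam n i j =
     lam * min \<bar>real i - real j\<bar> (real n - \<bar>real i - real j\<bar>)"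

definition rough_isometric_embedding ::
  "'b set \<Rightarrow> ('b \<Rightarrow> 'b \<Rightarrow> real) \<Rightarrow> 'a set \<Rightarrow> ('a \<Rightarrow> 'a \<Rightarrow> real) \<Rightarrow> real \<Rightarrow> ('b \<Rightarrow> 'a) \<Rightarrow> bool" where
  "rough_isometric_embedding A dA X d R f \<longleftrightarrow>
     f ` A \<subseteq> X \<and>
     (\<forall>a\<in>A. \<forall>a'\<in>A. dA a a' - R \<le> d (f a) (f a') \<and> d (f a) (f a') \<le> dA a a' + R)"

definition quasi_isometric_embedding ::
  "'b set \<Rightarrow> ('b \<Rightarrow> 'b \<Rightarrow> real) \<Rightarrow> 'a set \<Rightarrow> ('a \<Rightarrow> 'a \<Rightarrow> real) \<Rightarrow> real \<Rightarrow> real \<Rightarrow> ('b \<Rightarrow> 'a) \<Rightarrow> bool" where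
  "quasi_isometric_embedding A dA X d L C f \<longleftrightarrow>
     f ` A \<subseteq> X \<and>
     (\<forall>a\<in>A. \<forall>a'\<in>A. (1 / L) * dA a a' - C \<le> d (f a) (f a') \<and> d (f a) (f a') \<le> L * dA a a' + C)"

definition bilipschitz_embedding ::
  "'b set \<Rightarrow> ('b \<Rightarrow> 'b \<Rightarrow> real) \<Rightarrow> 'a set \<Rightarrow> ('a \<Rightarrow> 'a \<Rightarrow> real) \<Rightarrow> real \<Rightarrow> ('b \<Rightarrow> 'a) \<Rightarrow> bool" where
  "bilipschitz_embedding A dA X d K f \<longleftrightarrow>
     f ` A \<subseteq> X \<and>
     (\<forall>a\<in>A. \<forall>a'\<in>A. (1 / K) * dA a a' \<le> d (f a) (f a') \<and> d (f a) (f a') \<le> K * dA a a')"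

definition rough_geodesic :: "'a set \<Rightarrow> ('a \<Rightarrow> 'a \<Rightarrow> real) \<Rightarrow> real \<Rightarrow> 'a \<Rightarrow> 'a \<Rightarrow> (real \<Rightarrow> 'a) \<Rightarrow> bool" where
  "rough_geodesic X d R x1 x2 f \<longleftrightarrow>
     rough_isometric_embedding {0..d x1 x2} (\<lambda>s t. \<bar>s - t\<bar>) X d R f \<and>
     f 0 = x1 \<and> f (d x1 x2) = x2"

definition rough_geodesic_space :: "'a set \<Rightarrow> ('a \<Rightarrow> 'a \<Rightarrow> real) \<Rightarrow> real \<Rightarrow> bool" where
  "rough_geodesic_space X d R \<longleftrightarrow> (\<forall>x1\<in>X. \<forall>x2\<in>X. \<exists>f. rough_geodesic X d R x1 x2 f)"

definition R_circle :: "'a set \<Rightarrow> ('a \<Rightarrow> 'a \<Rightarrow> real) \<Rightarrow> real \<Rightarrow> real \<Rightarrow> (real \<Rightarrow> 'a) \<Rightarrow> bool" where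
  "R_circle X d R c \<alpha> \<longleftrightarrow>
     c > 0 \<and> \<alpha> ` circle_pts c \<subseteq> X \<and>
     (\<forall>p\<in>circle_pts c. \<forall>q\<in>circle_pts c. d (\<alpha> p) (\<alpha> q) \<le> circle_dist c p q + R)"

text \<open>Antipodal points of the circle of length c are those at distance c/2.\<close>

definition almost_isometric :: "('a \<Rightarrow> 'a \<Rightarrow> real) \<Rightarrow> real \<Rightarrow> real \<Rightarrow> (real \<Rightarrow> 'a) \<Rightarrow> bool" where
  "almost_isometric d K c \<alpha> \<longleftrightarrow>
     (\<forall>p\<in>circle_pts c. \<forall>q\<in>circle_pts c. circle_dist c p q = c / 2 \<longrightarrow>
        d (\<alpha> p) (\<alpha> q) \<ge> (1 / K) * (c / 2))"

definition strongly_shortcut :: "'a set \<Rightarrow> ('a \<Rightarrow> 'a \<Rightarrow> real) \<Rightarrow> real \<Rightarrow> bool" where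
  "strongly_shortcut X d R \<longleftrightarrow>
     (\<exists>K>1. \<exists>B. \<forall>c \<alpha>. R_circle X d R c \<alpha> \<and> almost_isometric d K c \<alpha> \<longrightarrow> c \<le> B)"

definition approximates_ngons :: "'a set \<Rightarrow> ('a \<Rightarrow> 'a \<Rightarrow> real) \<Rightarrow> bool" where
  "approximates_ngons X d \<longleftrightarrow>
     (\<forall>K>1. \<forall>n::nat. n \<ge> 1 \<longrightarrow> (\<forall>\<Lambda>. \<exists>lam>\<Lambda>. \<exists>f.
        bilipschitz_embedding (cycle_verts n) (scaled_cycle_dist lam n) X d K f))"

definition nonprincipal_ultrafilter :: "nat filter \<Rightarrow> bool" where
  "nonprincipal_ultrafilter U \<longleftrightarrow>
     U \<noteq> bot \<and> (\<forall>P. eventually P U \<or> eventually (\<lambda>m. \<not> P m) U) \<and>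
     (\<forall>n. eventually (\<lambda>m. m \<noteq> n) U)"

definition ulim :: "nat filter \<Rightarrow> (nat \<Rightarrow> real) \<Rightarrow> real" where
  "ulim U f = Lim U f"

definition cone_seqs ::
  "'a set \<Rightarrow> ('a \<Rightarrow> 'a \<Rightarrow> real) \<Rightarrow> (nat \<Rightarrow> 'a) \<Rightarrow> (nat \<Rightarrow> real) \<Rightarrow> (nat \<Rightarrow> 'a) set" where
  "cone_seqs X d b s = {x. (\<forall>m. x m \<in> X) \<and> bounded (range (\<lambda>m. d (x m) (b m) / s m))}"

definition cone_pdist ::
  "('a \<Rightarrow> 'a \<Rightarrow> real) \<Rightarrow> nat filter \<Rightarrow> (nat \<Rightarrow> real) \<Rightarrow> (nat \<Rightarrow> 'a) \<Rightarrow> (nat \<Rightarrow> 'a) \<Rightarrow> real" where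
  "cone_pdist d U s x y = ulim U (\<lambda>m. d (x m) (y m) / s m)"

definition cone_rel ::
  "'a set \<Rightarrow> ('a \<Rightarrow> 'a \<Rightarrow> real) \<Rightarrow> nat filter \<Rightarrow> (nat \<Rightarrow> 'a) \<Rightarrow> (nat \<Rightarrow> real) \<Rightarrow> ((nat \<Rightarrow> 'a) \<times> (nat \<Rightarrow> 'a)) set" where
  "cone_rel X d U b s = {(x, y). x \<in> cone_seqs X d b s \<and> y \<in> cone_seqs X d b s \<and> cone_pdist d U s x y = 0}"

definition asymptotic_cone ::
  "'a set \<Rightarrow> ('a \<Rightarrow> 'a \<Rightarrow> real) \<Rightarrow> nat filter \<Rightarrow> (nat \<Rightarrow> 'a) \<Rightarrow> (nat \<Rightarrow> real) \<Rightarrow> (nat \<Rightarrow> 'a) set set" where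
  "asymptotic_cone X d U b s = cone_seqs X d b s // cone_rel X d U b s"

text \<open>Quotient metric on classes (well defined: independent of representatives).\<close>

definition cone_dist ::
  "('a \<Rightarrow> 'a \<Rightarrow> real) \<Rightarrow> nat filter \<Rightarrow> (nat \<Rightarrow> real) \<Rightarrow> (nat \<Rightarrow> 'a) set \<Rightarrow> (nat \<Rightarrow> 'a) set \<Rightarrow> real" where
  "cone_dist d U s A B = cone_pdist d U s (SOME x. x \<in> A) (SOME y. y \<in> B)"

definition asymptotic_cone_data ::
  "'a set \<Rightarrow> nat filter \<Rightarrow> (nat \<Rightarrow> 'a) \<Rightarrow> (nat \<Rightarrow> real) \<Rightarrow> bool" where
  "asymptotic_cone_data X U b s \<longleftrightarrow>
     nonprincipal_ultrafilter U \<and> (\<forall>m. b m \<in> X) \<and> (\<forall>m. s m > 0) \<and>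
     filterlim s at_top sequentially"

definition cone_contains_unit_circle :: "'a set \<Rightarrow> ('a \<Rightarrow> 'a \<Rightarrow> real) \<Rightarrow> bool" where
  "cone_contains_unit_circle X d \<longleftrightarrow>
     (\<exists>U b s. asymptotic_cone_data X U b s \<and>
       (\<exists>f. f ` circle_pts 1 \<subseteq> asymptotic_cone X d U b s \<and>
            (\<forall>p\<in>circle_pts 1. \<forall>q\<in>circle_pts 1. cone_dist d U s (f p) (f q) = circle_dist 1 p q)))"

end

theory Submission
  imports Defs
begin

lemma circle_dist_scaled:
  assumes "lam \<ge> 0"
  shows "circle_dist (real n * lam) (real i * lam) (real j * lam) = scaled_cycle_dist lam n i j"
proof -
  have "\<bar>real i * lam - real j * lam\<bar> = lam * \<bar>real i - real j\<bar>"
    using assms by (simp add: abs_mult left_diff_distrib[symmetric])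
  moreover have "real n * lam - lam * \<bar>real i - real j\<bar> = lam * (real n - \<bar>real i - real j\<bar>)"
    by (simp add: algebra_simps)
  ultimately show ?thesis
    unfolding circle_dist_def scaled_cycle_dist_def using assms
    by (simp add: min_mult_distrib_left)
qed

lemma cyc_ge1:
  assumes "i < n" "j < n" "i \<noteq> j"
  shows "min \<bar>real i - real j\<bar> (real n - \<bar>real i - real j\<bar>) \<ge> 1"
  using assms by (auto simp: min_def abs_if)

lemma L4:
  assumes ms: "Metric_space X d"
    and H: "\<forall>L>1. \<exists>C\<ge>0. \<forall>B. \<exists>c f. c > 0 \<and>
              quasi_isometric_embedding (circle_pts c) (circle_dist c) X d L C f \<and> \<not> c \<le> B"
  shows "approximates_ngons X d"
  unfolding approximates_ngons_def
proof (intro allI impI)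
  fix K :: real and n :: nat and Lam :: real
  assume K: "K > 1" and n: "n \<ge> 1"
  define L where "L = sqrt K"
  have L1: "L > 1" using K by (simp add: L_def)
  have LK: "L * L = K" using K by (simp add: L_def)
  have LltK: "L < K"
  proof -
    have "L * 1 < L * L" using L1 by (intro mult_strict_left_mono) auto
    thus ?thesis using LK by simp
  qed
  have gap1: "1/L - 1/K > 0" using L1 LltK by (simp add: frac_less2)
  have gap2: "K - L > 0" using LltK by simp
  obtain C where C0: "C \<ge> 0" and HC: "\<forall>B. \<exists>c f. c > 0 \<and>
      quasi_isometric_embedding (circle_pts c) (circle_dist c) X d L C f \<and> \<not> c \<le> B"
    using H L1 by blast
  define M where "M = max (max Lam 0) (max (C / (1/L - 1/K)) (C / (K - L)))"
  obtain c f where c0: "c > 0" and qi: "quasi_isometric_embedding (circle_pts c) (circle_dist c) X d L C f"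
     and cB: "c > real n * M" using HC[rule_format, of "real n * M"] by auto
  define lam where "lam = c / real n"
  have npos: "real n > 0" using n by simp
  have lamM: "lam > M" using cB npos by (simp add: lam_def field_simps)
  have lampos: "lam > 0" using c0 npos by (simp add: lam_def)
  have clam: "c = real n * lam" using npos by (simp add: lam_def)
  have lamC1: "lam * (1/L - 1/K) \<ge> C"
  proof -
    have "lam \<ge> C / (1/L - 1/K)" using lamM unfolding M_def by linarith
    thus ?thesis using gap1 by (simp add: divide_le_eq mult.commute)
  qed
  have lamC2: "lam * (K - L) \<ge> C"
  proof -
    have "lam \<ge> C / (K - L)" using lamM unfolding M_def by linarith
    thus ?thesis using gap2 by (simp add: divide_le_eq mult.commute)
  qed
  define g where "g = (\<lambda>i::nat. f (real i * lam))"
  have pts: "real i * lam \<in> circle_pts c" if "i < n" for i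
    using that lampos clam by (simp add: circle_pts_def)
  have inX: "g i \<in> X" if "i < n" for i
    using qi pts[OF that] unfolding quasi_isometric_embedding_def g_def by auto
  have "bilipschitz_embedding (cycle_verts n) (scaled_cycle_dist lam n) X d K g"
    unfolding bilipschitz_embedding_def
  proof (rule conjI, goal_cases)
    case 1 show ?case using inX by (auto simp: cycle_verts_def)
  next
    case 2 show ?case proof (intro ballI)
    fix i j assume i: "i \<in> cycle_verts n" and j: "j \<in> cycle_verts n"
    hence ij: "i < n" "j < n" by (auto simp: cycle_verts_def)
    define S where "S = scaled_cycle_dist lam n i j"
    have qb0: "(1/L) * circle_dist c (real i * lam) (real j * lam) - C \<le> d (g i) (g j) \<and> d (g i) (g j) \<le> L * circle_dist c (real i * lam) (real j * lam) + C"
      using qi pts[OF ij(1)] pts[OF ij(2)]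
      unfolding quasi_isometric_embedding_def g_def by blast
    have "circle_dist c (real i * lam) (real j * lam) = S"
      using circle_dist_scaled[of lam n i j] lampos clam unfolding S_def by simp
    hence qb: "(1/L) * S - C \<le> d (g i) (g j) \<and> d (g i) (g j) \<le> L * S + C" using qb0 by simp
    show "1 / K * scaled_cycle_dist lam n i j \<le> d (g i) (g j) \<and> d (g i) (g j) \<le> K * scaled_cycle_dist lam n i j"
    proof (cases "i = j")
      case True
      have "d (g j) (g j) = 0" using Metric_space.zero[OF ms, of "g j" "g j"] inX[OF ij(2)] by simp
      thus ?thesis using True by (simp add: scaled_cycle_dist_def)
    next
      case False
      have m1: "min \<bar>real i - real j\<bar> (real n - \<bar>real i - real j\<bar>) \<ge> 1"
        using cyc_ge1[OF ij False] .
      have Sge: "S \<ge> lam"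
        using mult_left_mono[OF m1, of lam] lampos unfolding S_def scaled_cycle_dist_def by simp
      have a: "S * (1/L - 1/K) \<ge> C" using mult_right_mono[OF Sge, of "1/L - 1/K"] lamC1 gap1 by linarith
      have b: "S * (K - L) \<ge> C" using mult_right_mono[OF Sge, of "K - L"] lamC2 gap2 by linarith
      have "1/K * S \<le> (1/L) * S - C" using a by (simp add: algebra_simps)
      moreover have "L * S + C \<le> K * S" using b by (simp add: algebra_simps)
      ultimately show ?thesis using qb unfolding S_def by linarith
    qed
  qed
  qed
  thus "\<exists>lam>Lam. \<exists>f. bilipschitz_embedding (cycle_verts n) (scaled_cycle_dist lam n) X d K f"
    using lamM unfolding M_def by (intro exI[of _ lam]) auto
qed

definition cycd :: "nat \<Rightarrow> nat \<Rightarrow> nat \<Rightarrow> real" where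
  "cycd n i j = min \<bar>real (i mod n) - real (j mod n)\<bar> (real n - \<bar>real (i mod n) - real (j mod n)\<bar>)"

lemma cycd_succ_le1: assumes "n \<ge> 1" shows "cycd n i (Suc i) \<le> 1"
proof -
  have "i mod n < n" using assms by simp
  show ?thesis
  proof (cases "Suc (i mod n) = n")
    case True
    hence "Suc i mod n = 0" by (metis mod_Suc)
    thus ?thesis using True unfolding cycd_def by (simp add: min_def)
  next
    case False
    hence "Suc i mod n = Suc (i mod n)" by (metis mod_Suc)
    thus ?thesis unfolding cycd_def by (simp add: min_def)
  qed
qed

locale polyP = Metric_space X d for X :: "'a set" and d +
  fixes R lam K :: real and n :: nat and f :: "nat \<Rightarrow> 'a"
  assumes R0: "R \<ge> 0" and rg: "rough_geodesic_space X d R" and K1: "K > 1"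
    and lam0: "lam > 0" and n2: "n \<ge> 2"
    and bl: "bilipschitz_embedding (cycle_verts n) (scaled_cycle_dist lam n) X d K f"
begin

definition Y :: "nat \<Rightarrow> 'a" where "Y i = f (i mod n)"

lemma Y_in: "Y i \<in> X"
  using bl n2 unfolding bilipschitz_embedding_def Y_def cycle_verts_def by auto

lemma Y_bounds: "lam * cycd n i j / K \<le> d (Y i) (Y j) \<and> d (Y i) (Y j) \<le> K * (lam * cycd n i j)"
proof -
  have "i mod n \<in> cycle_verts n" "j mod n \<in> cycle_verts n" using n2 by (auto simp: cycle_verts_def)
  hence "1 / K * scaled_cycle_dist lam n (i mod n) (j mod n) \<le> d (Y i) (Y j) \<and>
         d (Y i) (Y j) \<le> K * scaled_cycle_dist lam n (i mod n) (j mod n)"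
    using bl unfolding bilipschitz_embedding_def Y_def by blast
  moreover have "scaled_cycle_dist lam n (i mod n) (j mod n) = lam * cycd n i j"
    unfolding scaled_cycle_dist_def cycd_def by simp
  ultimately show ?thesis by simp
qed

definition D :: real where "D = K * lam"

lemma D_pos: "D > 0" using K1 lam0 by (simp add: D_def)

lemma Y_step: "d (Y i) (Y (Suc i)) \<le> D"
proof -
  have "d (Y i) (Y (Suc i)) \<le> K * (lam * cycd n i (Suc i))" using Y_bounds by blast
  also have "\<dots> \<le> K * (lam * 1)"
    using cycd_succ_le1[of n i] n2 K1 lam0 by (intro mult_left_mono) auto
  finally show ?thesis by (simp add: D_def)
qed

lemma Y_chain: "d (Y a) (Y (a + q)) \<le> real q * D"
proof (induction q)
  case 0 thus ?case using Y_in by simp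
next
  case (Suc q)
  have "d (Y a) (Y (a + Suc q)) \<le> d (Y a) (Y (a + q)) + d (Y (a + q)) (Y (Suc (a + q)))"
    using triangle[OF Y_in Y_in Y_in] by simp
  also have "\<dots> \<le> real q * D + D" using Suc Y_step by (intro add_mono) auto
  finally show ?case by (simp add: algebra_simps)
qed

end

context polyP begin

definition ell :: "nat \<Rightarrow> real" where "ell k = d (Y k) (Y (Suc k))"
definition gam :: "nat \<Rightarrow> real \<Rightarrow> 'a" where
  "gam k = (SOME g. rough_geodesic X d R (Y k) (Y (Suc k)) g)"

lemma gam_rg: "rough_geodesic X d R (Y k) (Y (Suc k)) (gam k)"
proof -
  have "\<exists>g. rough_geodesic X d R (Y k) (Y (Suc k)) g"
    using rg Y_in unfolding rough_geodesic_space_def by blast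
  thus ?thesis unfolding gam_def by (rule someI_ex)
qed

lemma gam_props:
  shows "gam k 0 = Y k" "gam k (ell k) = Y (Suc k)"
    and "\<And>a. a \<in> {0..ell k} \<Longrightarrow> gam k a \<in> X"
    and "\<And>a b. a \<in> {0..ell k} \<Longrightarrow> b \<in> {0..ell k} \<Longrightarrow> d (gam k a) (gam k b) \<le> \<bar>a - b\<bar> + R"
    and "\<And>a b. a \<in> {0..ell k} \<Longrightarrow> b \<in> {0..ell k} \<Longrightarrow> \<bar>a - b\<bar> - R \<le> d (gam k a) (gam k b)"
  using gam_rg[of k] unfolding rough_geodesic_def rough_isometric_embedding_def ell_def
  by auto

lemma ell_nonneg: "ell k \<ge> 0" by (simp add: ell_def)
lemma ell_le: "ell k \<le> D" using Y_step by (simp add: ell_def)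

definition E :: real where "E = D + R"
lemma E_pos: "E > 0" using D_pos R0 by (simp add: E_def)

definition unit :: "real \<Rightarrow> nat" where "unit t = nat \<lfloor>t / E\<rfloor>"
definition off :: "real \<Rightarrow> real" where "off t = t - real (unit t) * E"
definition par :: "nat \<Rightarrow> real \<Rightarrow> real" where "par k s = ell k * min (s / D) 1"
definition alpha :: "real \<Rightarrow> 'a" where "alpha t = gam (unit t) (par (unit t) (off t))"
definition cc :: real where "cc = real n * E"

lemma unit_off:
  assumes "t \<ge> 0"
  shows "0 \<le> off t" "off t < E" "t = real (unit t) * E + off t"
proof -
  have fl: "real_of_int \<lfloor>t / E\<rfloor> \<le> t / E" "t / E < real_of_int \<lfloor>t / E\<rfloor> + 1" by linarith+
  have nn: "\<lfloor>t / E\<rfloor> \<ge> 0" using assms E_pos by simp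
  have u: "real (unit t) = real_of_int \<lfloor>t / E\<rfloor>" unfolding unit_def using nn by simp
  have "real_of_int \<lfloor>t / E\<rfloor> * E \<le> t / E * E" using fl(1) E_pos by (intro mult_right_mono) auto
  thus "0 \<le> off t" unfolding off_def u using E_pos by simp
  show "off t < E" unfolding off_def u using fl(2) E_pos by (simp add: field_simps)
  show "t = real (unit t) * E + off t" unfolding off_def by simp
qed

lemma unit_eq:
  assumes "0 \<le> s" "s < E"
  shows "unit (real k * E + s) = k" "off (real k * E + s) = s"
proof -
  have "(real k * E + s) / E = real k + s / E" using E_pos by (simp add: field_simps)
  moreover have "0 \<le> s / E" "s / E < 1" using assms E_pos by auto
  ultimately have "\<lfloor>(real k * E + s) / E\<rfloor> = int k"
    by (simp add: floor_unique)
  thus u: "unit (real k * E + s) = k" unfolding unit_def by simp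
  show "off (real k * E + s) = s" unfolding off_def u by simp
qed

lemma unit_lt:
  assumes "0 \<le> t" "t < cc" shows "unit t < n"
proof -
  have "real (unit t) * E \<le> t" using unit_off[OF assms(1)] by linarith
  hence "real (unit t) * E < real n * E" using assms cc_def by simp
  thus ?thesis using E_pos by simp
qed

lemma par_props:
  assumes "0 \<le> s"
  shows "0 \<le> par k s" "par k s \<le> ell k" "par k s \<le> s"
proof -
  have m0: "0 \<le> min (s / D) 1" using assms D_pos by simp
  have m1: "min (s / D) 1 \<le> 1" by simp
  show "0 \<le> par k s" unfolding par_def using m0 ell_nonneg by simp
  show "par k s \<le> ell k" unfolding par_def using mult_left_mono[OF m1 ell_nonneg] by simp
  have "par k s \<le> D * min (s / D) 1" unfolding par_def using mult_right_mono[OF ell_le m0] .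
  also have "\<dots> \<le> D * (s / D)" using D_pos by (intro mult_left_mono) auto
  finally show "par k s \<le> s" using D_pos by simp
qed

lemma par_lip:
  assumes "0 \<le> s" "s \<le> s'"
  shows "par k s' - par k s \<le> s' - s"
proof -
  have "min (s' / D) 1 - min (s / D) 1 \<le> (s' - s) / D"
    using assms D_pos by (auto simp: min_def diff_divide_distrib divide_right_mono)
  moreover have "min (s / D) 1 \<le> min (s' / D) 1" using assms D_pos by (auto simp: min_def divide_right_mono)
  ultimately have "ell k * (min (s' / D) 1 - min (s / D) 1) \<le> D * ((s' - s) / D)"
    using ell_le ell_nonneg D_pos by (intro mult_mono) auto
  moreover have "D * ((s' - s) / D) = s' - s" using D_pos by simp
  ultimately show ?thesis unfolding par_def by (simp add: algebra_simps)
qed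

lemma par_full: assumes "s \<ge> D" shows "par k s = ell k"
  using assms D_pos unfolding par_def by simp

lemma par_in: "0 \<le> s \<Longrightarrow> par k s \<in> {0..ell k}" using par_props by auto

lemma to_next:
  assumes "0 \<le> s" "s < E"
  shows "d (gam k (par k s)) (Y (Suc k)) \<le> E - s"
proof (cases "s \<ge> D")
  case True
  hence "gam k (par k s) = Y (Suc k)" using par_full gam_props(2) by simp
  thus ?thesis using Y_in assms by simp
next
  case False
  have "d (gam k (par k s)) (Y (Suc k)) = d (gam k (par k s)) (gam k (ell k))"
    using gam_props(2) by simp
  also have "\<dots> \<le> \<bar>par k s - ell k\<bar> + R"
    using gam_props(4)[OF par_in[OF assms(1)], of "ell k"] ell_nonneg by simp
  also have "\<dots> = ell k - par k s + R" using par_props[OF assms(1), of k] by simp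
  also have "\<dots> \<le> E - s"
  proof -
    have "par k D - par k s \<le> D - s" using par_lip[OF assms(1), of D] False by simp
    thus ?thesis using par_full[of D] by (simp add: E_def)
  qed
  finally show ?thesis .
qed

lemma from_start:
  assumes "0 \<le> s"
  shows "d (Y k) (gam k (par k s)) \<le> s + R" "d (Y k) (gam k (par k s)) \<le> E"
proof -
  have "d (Y k) (gam k (par k s)) = d (gam k 0) (gam k (par k s))" using gam_props(1) by simp
  also have "\<dots> \<le> \<bar>0 - par k s\<bar> + R"
    using gam_props(4)[OF _ par_in[OF assms(1)], of 0] ell_nonneg by simp
  also have "\<dots> = par k s + R" using par_props[OF assms(1), of k] by simp
  finally have *: "d (Y k) (gam k (par k s)) \<le> par k s + R" .
  thus "d (Y k) (gam k (par k s)) \<le> s + R" using par_props[OF assms(1), of k] by simp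
  show "d (Y k) (gam k (par k s)) \<le> E" using * par_props[OF assms(1), of k] ell_le[of k]
    unfolding E_def by linarith
qed

lemma alpha_in: "0 \<le> t \<Longrightarrow> alpha t \<in> X"
  unfolding alpha_def using gam_props(3) par_in unit_off by blast

end

context polyP begin

lemma same_unit:
  assumes "0 \<le> s" "s \<le> s'"
  shows "d (gam k (par k s)) (gam k (par k s')) \<le> s' - s + R"
proof -
  have "par k s \<le> par k s'" unfolding par_def using assms D_pos ell_nonneg
    by (intro mult_left_mono) (auto simp: min_def divide_right_mono)
  moreover have "d (gam k (par k s)) (gam k (par k s')) \<le> \<bar>par k s - par k s'\<bar> + R"
    using gam_props(4)[OF par_in par_in] assms by simp
  ultimately show ?thesis using par_lip[OF assms, of k] by linarith
qed

lemma fwd_bound: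
  assumes t: "0 \<le> t" "t < cc" and t': "0 \<le> t'" "t' < cc"
  shows "d (alpha t) (alpha t') \<le> (if t \<le> t' then t' - t else cc + t' - t) + R"
proof -
  define k where "k = unit t"
  define j where "j = unit t'"
  define s where "s = off t"
  define s' where "s' = off t'"
  have s: "0 \<le> s" "s < E" "t = real k * E + s" using unit_off[OF t(1)] unfolding k_def s_def by auto
  have s': "0 \<le> s'" "s' < E" "t' = real j * E + s'" using unit_off[OF t'(1)] unfolding j_def s'_def by auto
  have kn: "k < n" "j < n" using unit_lt t t' unfolding k_def j_def by auto
  have at: "alpha t = gam k (par k s)" "alpha t' = gam j (par j s')"
    unfolding alpha_def k_def j_def s_def s'_def by auto
  show ?thesis
  proof (cases "k = j \<and> t \<le> t'")
    case True
    hence ss: "s \<le> s'" using s(3) s'(3) by auto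
    thus ?thesis using same_unit[OF s(1) ss, of k] True at s s' by simp
  next
    case False
    define q where "q = (if k < j then j - k - 1 else n + j - k - 1)"
    have qY: "Y (Suc k + q) = Y j"
    proof (cases "k < j")
      case True thus ?thesis unfolding q_def by simp
    next
      case False
      hence "Suc k + q = n + j" unfolding q_def using kn by simp
      thus ?thesis unfolding Y_def by simp
    qed
    have F: "(if t \<le> t' then t' - t else cc + t' - t) = (E - s) + real q * E + s'"
    proof (cases "k < j")
      case True
      have "(real k + 1) * E \<le> real j * E"
        using True E_pos by (intro mult_right_mono) auto
      hence "real k * E + E \<le> real j * E" by (simp add: algebra_simps)
      hence "t \<le> t'" using s s' by linarith
      moreover have "real q = real j - real k - 1" unfolding q_def using True by auto
      hence "real q * E = (real j - real k - 1) * E" by simp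
      hence qE: "real q * E = real j * E - real k * E - E" by (simp add: algebra_simps)
      ultimately show ?thesis using s(3) s'(3) qE by simp
    next
      case False
      have "t' < t"
      proof (cases "k = j")
        case True thus ?thesis using \<open>\<not> (k = j \<and> t \<le> t')\<close> by simp
      next
        case False
        hence "j < k" using \<open>\<not> k < j\<close> by simp
        hence "(real j + 1) * E \<le> real k * E"
          using E_pos by (intro mult_right_mono) auto
        hence "real j * E + E \<le> real k * E" by (simp add: algebra_simps)
        thus ?thesis using s s' by linarith
      qed
      moreover have "real q = real n + real j - real k - 1" unfolding q_def using False kn by auto
      hence "real q * E = (real n + real j - real k - 1) * E" by simp
      hence qE: "real q * E = real n * E + real j * E - real k * E - E" by (simp add: algebra_simps)
      ultimately show ?thesis using s(3) s'(3) qE by (simp add: cc_def)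
    qed
    have "d (alpha t) (alpha t') \<le> d (alpha t) (Y (Suc k)) + d (Y (Suc k)) (alpha t')"
      using triangle alpha_in Y_in t t' by blast
    also have "\<dots> \<le> d (alpha t) (Y (Suc k)) + (d (Y (Suc k)) (Y (Suc k + q)) + d (Y (Suc k + q)) (alpha t'))"
      using triangle alpha_in Y_in t t' by (meson add_left_mono)
    also have "\<dots> \<le> (E - s) + (real q * D + (s' + R))"
    proof (intro add_mono)
      show "d (alpha t) (Y (Suc k)) \<le> E - s" using at to_next s by simp
      show "d (Y (Suc k)) (Y (Suc k + q)) \<le> real q * D" by (rule Y_chain)
      show "d (Y (Suc k + q)) (alpha t') \<le> s' + R" using qY at from_start s' by simp
    qed
    also have "\<dots> \<le> (E - s) + real q * E + s' + R"
      using R0 by (simp add: E_def mult_left_mono)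
    finally show ?thesis using F by simp
  qed
qed

lemma cc_pos: "cc > 0" using E_pos n2 by (simp add: cc_def)

lemma is_R_circle: "R_circle X d R cc alpha"
  unfolding R_circle_def
proof (intro conjI)
  show "cc > 0" by (rule cc_pos)
  show "alpha ` circle_pts cc \<subseteq> X" using alpha_in by (auto simp: circle_pts_def)
  show "\<forall>p\<in>circle_pts cc. \<forall>q\<in>circle_pts cc. d (alpha p) (alpha q) \<le> circle_dist cc p q + R"
  proof (intro ballI)
    fix p q assume p: "p \<in> circle_pts cc" and q: "q \<in> circle_pts cc"
    hence pq: "0 \<le> p" "p < cc" "0 \<le> q" "q < cc" by (auto simp: circle_pts_def)
    have b1: "d (alpha p) (alpha q) \<le> (if p \<le> q then q - p else cc + q - p) + R"
      using fwd_bound pq by blast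
    have b2: "d (alpha p) (alpha q) \<le> (if q \<le> p then p - q else cc + p - q) + R"
      using fwd_bound[of q p] pq commute by simp
    show "d (alpha p) (alpha q) \<le> circle_dist cc p q + R"
      unfolding circle_dist_def
      using b1 b2 cc_pos by (cases "p \<le> q") (auto simp: min_def split: if_splits)
  qed
qed

end

context polyP begin

lemma antipodal_aux:
  assumes nm: "n = 2 * m" and p: "0 \<le> p" and q: "q < cc" and pq: "q = p + real m * E"
  shows "d (alpha p) (alpha q) \<ge> lam * real m / K - 2 * E"
proof -
  define k where "k = unit p"
  define s where "s = off p"
  have s: "0 \<le> s" "s < E" "p = real k * E + s" using unit_off[OF p] unfolding k_def s_def by auto
  have qq: "q = real (k + m) * E + s" using pq s(3) by (simp add: algebra_simps)
  have uq: "unit q = k + m" "off q = s" using unit_eq[OF s(1,2), of "k+m"] qq by auto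
  have "0 \<le> q" using qq s E_pos by simp
  hence km: "k + m < n" using unit_lt[of q] q uq by simp
  have ap: "alpha p = gam k (par k s)" unfolding alpha_def k_def s_def by simp
  have aq: "alpha q = gam (k+m) (par (k+m) s)" unfolding alpha_def using uq by simp
  have cyc: "cycd n k (k + m) = real m"
    using km nm unfolding cycd_def by (simp add: min_def)
  have Yb: "d (Y k) (Y (k + m)) \<ge> lam * real m / K" using Y_bounds[of k "k+m"] cyc by simp
  have "d (Y k) (Y (k + m)) \<le> d (Y k) (alpha p) + d (alpha p) (Y (k + m))"
    using triangle Y_in alpha_in p by blast
  also have "\<dots> \<le> d (Y k) (alpha p) + (d (alpha p) (alpha q) + d (alpha q) (Y (k + m)))"
    using triangle Y_in alpha_in p \<open>0 \<le> q\<close> by (meson add_left_mono)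
  finally have "d (Y k) (Y (k + m)) \<le> d (Y k) (alpha p) + d (alpha p) (alpha q) + d (Y (k + m)) (alpha q)"
    using commute by simp
  moreover have "d (Y k) (alpha p) \<le> E" using from_start(2) s ap by simp
  moreover have "d (Y (k + m)) (alpha q) \<le> E" using from_start(2) s aq by simp
  ultimately show ?thesis using Yb by linarith
qed

lemma antipodal:
  assumes nm: "n = 2 * m" and p: "p \<in> circle_pts cc" and q: "q \<in> circle_pts cc"
    and cd: "circle_dist cc p q = cc / 2"
  shows "d (alpha p) (alpha q) \<ge> lam * real m / K - 2 * E"
proof -
  have pq: "0 \<le> p" "p < cc" "0 \<le> q" "q < cc" using p q by (auto simp: circle_pts_def)
  have "\<bar>p - q\<bar> = cc / 2" using cd unfolding circle_dist_def by (auto simp: min_def split: if_splits)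
  moreover have "cc / 2 = real m * E" unfolding cc_def using nm by simp
  ultimately have "q = p + real m * E \<or> p = q + real m * E" by (auto simp: abs_if split: if_splits)
  thus ?thesis
  proof
    assume "q = p + real m * E" thus ?thesis using antipodal_aux[OF nm pq(1) pq(4)] by simp
  next
    assume "p = q + real m * E" thus ?thesis using antipodal_aux[OF nm pq(3) pq(2)] commute by simp
  qed
qed

end

lemma L5:
  assumes ms: "Metric_space X d" and R0: "R \<ge> 0" and rg: "rough_geodesic_space X d R"
    and ap: "approximates_ngons X d"
  shows "\<not> strongly_shortcut X d R"
  unfolding strongly_shortcut_def
proof (intro notI, elim exE conjE)
  fix K' B assume K': "K' > 1" and bnd: "\<forall>c \<alpha>. R_circle X d R c \<alpha> \<and> almost_isometric d K' c \<alpha> \<longrightarrow> c \<le> B"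
  define K where "K = sqrt (sqrt K')"
  have K1: "K > 1" using K' by (simp add: K_def)
  have KK: "K * K = sqrt K'" using K' by (simp add: K_def)
  have sK: "sqrt K' < K'"
  proof -
    have "sqrt K' * 1 < sqrt K' * sqrt K'" using K' by (intro mult_strict_left_mono) auto
    thus ?thesis using K' by simp
  qed
  define g where "g = 1 / K - K / K'"
  have g0: "g > 0"
  proof -
    have "K * K < K'" using KK sK by simp
    hence "K / K' < 1 / K" using K1 K' by (simp add: field_simps)
    thus ?thesis by (simp add: g_def)
  qed
  define m :: nat where "m = nat \<lceil>(2 * K + 1) / g\<rceil> + 1"
  have m1: "m \<ge> 1" by (simp add: m_def)
  have mg: "real m * g \<ge> 2 * K + 1"
  proof -
    have "real m \<ge> (2 * K + 1) / g" unfolding m_def by linarith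
    thus ?thesis using g0 by (simp add: divide_le_eq)
  qed
  define n where "n = 2 * m"
  have n2: "n \<ge> 2" using m1 by (simp add: n_def)
  obtain lam f where lam: "lam > max (max B 0) (R * (2 + real m))"
    and bf: "bilipschitz_embedding (cycle_verts n) (scaled_cycle_dist lam n) X d K f"
    using ap K1 n2 unfolding approximates_ngons_def by (meson order_trans one_le_numeral)
  have lam0: "lam > 0" using lam by simp
  interpret P: polyP X d R lam K n f
    by (intro polyP.intro polyP_axioms.intro ms) (use R0 rg K1 lam0 n2 bf in auto)
  have Ec: "P.E = K * lam + R" by (simp add: P.E_def P.D_def)
  have ai: "almost_isometric d K' P.cc P.alpha"
    unfolding almost_isometric_def
  proof (intro ballI impI)
    fix p q assume p: "p \<in> circle_pts P.cc" and q: "q \<in> circle_pts P.cc"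
      and cd: "circle_dist P.cc p q = P.cc / 2"
    have a: "d (P.alpha p) (P.alpha q) \<ge> lam * real m / K - 2 * P.E"
      using P.antipodal[OF n_def p q cd] .
    have "P.cc = real n * P.E" unfolding P.cc_def ..
    hence cc2: "P.cc / 2 = real m * (K * lam + R)" using Ec by (simp add: n_def)
    have "lam * real m / K - 2 * (K * lam + R) - (1 / K') * (real m * (K * lam + R))
        = lam * (real m * g) - 2 * K * lam - 2 * R - real m * R / K'"
      unfolding g_def using K' K1 by (simp add: field_simps)
    also have "\<dots> \<ge> lam * (2 * K + 1) - 2 * K * lam - 2 * R - real m * R"
    proof -
      have "lam * (real m * g) \<ge> lam * (2 * K + 1)" using mg lam0 by (intro mult_left_mono) auto
      moreover have "real m * R / K' \<le> real m * R"
      proof -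
        have "0 \<le> real m * R" using R0 by simp
        thus ?thesis using K' by (simp add: divide_le_eq mult_le_cancel_left1)
      qed
      ultimately show ?thesis by linarith
    qed
    also have "lam * (2 * K + 1) - 2 * K * lam - 2 * R - real m * R = lam - R * (2 + real m)"
      by (simp add: algebra_simps)
    finally have "lam * real m / K - 2 * (K * lam + R) - (1 / K') * (real m * (K * lam + R)) \<ge> 0"
      using lam by linarith
    thus "d (P.alpha p) (P.alpha q) \<ge> 1 / K' * (P.cc / 2)" using a cc2 Ec by simp
  qed
  have "P.cc \<le> B" using bnd P.is_R_circle ai by blast
  moreover have "P.cc \<ge> lam"
  proof -
    have "P.cc = real n * P.E" unfolding P.cc_def ..
    hence "P.cc = real n * (K * lam + R)" using Ec by simp
    moreover have "real n * (K * lam + R) \<ge> 1 * (1 * lam + 0)"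
      using n2 K1 R0 lam0 by (intro mult_mono add_mono) auto
    ultimately show ?thesis by simp
  qed
  ultimately show False using lam by simp
qed

lemma maximal_filter_ultra:
  fixes F :: "'b filter"
  assumes "F \<noteq> bot" and mx: "\<And>G. G \<noteq> bot \<Longrightarrow> G \<le> F \<Longrightarrow> F = G"
  shows "eventually P F \<or> eventually (\<lambda>x. \<not> P x) F"
proof (rule disjCI)
  assume "\<not> eventually (\<lambda>x. \<not> P x) F"
  hence "inf F (principal {x. P x}) \<noteq> bot"
    by (simp add: trivial_limit_def eventually_inf_principal)
  hence FF: "F = inf F (principal {x. P x})" by (rule mx) simp
  show "eventually P F" by (subst FF) (simp add: eventually_inf_principal)
qed

lemma exists_ultra_below:
  fixes F :: "'b filter"
  assumes F: "F \<noteq> bot"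
  shows "\<exists>U\<le>F. U \<noteq> bot \<and> (\<forall>P. eventually P U \<or> eventually (\<lambda>x. \<not> P x) U)"
proof -
  let ?R = "{(b, a). a \<noteq> bot \<and> a \<le> b \<and> b \<le> F}"
  have fld: "Field ?R = {G. G \<noteq> bot \<and> G \<le> F}"
    by (auto simp: Field_def bot_unique)
  have "\<exists>m\<in>Field ?R. \<forall>a\<in>Field ?R. (m, a) \<in> ?R \<longrightarrow> a = m"
  proof (rule Zorns_po_lemma)
    show "Partial_order ?R"
      by (auto simp: partial_order_on_def preorder_on_def
          antisym_def refl_on_def trans_def Field_def bot_unique)
    show "\<exists>u\<in>Field ?R. \<forall>a\<in>C. (a, u) \<in> ?R" if C: "C \<in> Chains ?R" for C
    proof -
      have nb: "bot \<notin> C" using C by (auto simp: Chains_def)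
      have Inf_C: "Inf C \<noteq> bot" "Inf C \<le> F" if "C \<noteq> {}"
      proof -
        from C that have "Inf C = bot \<longleftrightarrow> (\<exists>x\<in>C. x = bot)"
          unfolding trivial_limit_def by (intro eventually_Inf_base) (auto simp: Chains_def)
        with nb show "Inf C \<noteq> bot" by simp
        from that obtain x where "x \<in> C" by auto
        with C show "Inf C \<le> F"
          by (auto intro!: Inf_lower2[of x] simp: Chains_def)
      qed
      have eq: "inf F (Inf C) = (if C = {} then F else Inf C)"
        using Inf_C by (auto simp add: inf_absorb2)
      have "inf F (Inf C) \<in> Field ?R" unfolding fld using eq Inf_C F by auto
      moreover have "\<forall>a\<in>C. (a, inf F (Inf C)) \<in> ?R"
      proof
        fix a assume a: "a \<in> C"
        have "a \<le> F" using C a by (auto simp: Chains_def)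
        thus "(a, inf F (Inf C)) \<in> ?R" using a eq Inf_C F by (auto intro: Inf_lower)
      qed
      ultimately show ?thesis by blast
    qed
  qed
  then obtain U where U: "U \<in> Field ?R" "\<forall>a\<in>Field ?R. (U, a) \<in> ?R \<longrightarrow> a = U" by blast
  have U1: "U \<noteq> bot" "U \<le> F" using U(1) fld by auto
  have "\<forall>P. eventually P U \<or> eventually (\<lambda>x. \<not> P x) U"
  proof
    fix P
    show "eventually P U \<or> eventually (\<lambda>x. \<not> P x) U"
    proof (rule maximal_filter_ultra[OF U1(1)])
      fix G
      assume G: "G \<noteq> bot" "G \<le> U"
      have "G \<le> F" using G(2) U1(2) by (rule order_trans)
      hence "G \<in> Field ?R" using G(1) fld by simp
      moreover have "(U, G) \<in> ?R" using G U1 by simp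
      ultimately show "U = G" using U(2) by auto
    qed
  qed
  thus ?thesis using U1 by blast
qed

lemma ex_npu: "\<exists>U. nonprincipal_ultrafilter U"
proof -
  obtain U where U: "U \<le> sequentially" "U \<noteq> bot" "\<forall>P. eventually P U \<or> eventually (\<lambda>x. \<not> P x) U"
    using exists_ultra_below[of "sequentially :: nat filter"] by auto
  have "\<forall>n. eventually (\<lambda>m. m \<noteq> n) U"
  proof
    fix n :: nat
    have "eventually (\<lambda>m. m \<noteq> n) sequentially" using eventually_gt_at_top[of n]
      by (rule eventually_mono) simp
    thus "eventually (\<lambda>m. m \<noteq> n) U" using U(1) by (simp add: le_filter_def)
  qed
  thus ?thesis using U unfolding nonprincipal_ultrafilter_def by blast
qed

lemma npu_le_seq:
  assumes "nonprincipal_ultrafilter U"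
  shows "U \<le> sequentially"
  unfolding le_filter_def
proof (intro allI impI)
  fix P assume "eventually P sequentially"
  then obtain N where N: "\<And>m. m \<ge> N \<Longrightarrow> P m" by (auto simp: eventually_sequentially)
  have "\<forall>y\<in>{..<N}. eventually (\<lambda>m. m \<noteq> y) U" using assms unfolding nonprincipal_ultrafilter_def by blast
  hence "eventually (\<lambda>m. \<forall>y\<in>{..<N}. m \<noteq> y) U" by (intro eventually_ball_finite) auto
  thus "eventually P U" by (rule eventually_mono) (metis N lessThan_iff not_le)
qed

lemma npu_proper: "nonprincipal_ultrafilter U \<Longrightarrow> U \<noteq> bot"
  unfolding nonprincipal_ultrafilter_def by blast

lemma npu_conv:
  fixes g :: "nat \<Rightarrow> real"
  assumes U: "nonprincipal_ultrafilter U" and b: "bounded (range g)"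
  shows "\<exists>l. (g \<longlongrightarrow> l) U"
proof -
  obtain M where M: "\<And>m. \<bar>g m\<bar> \<le> M" using b by (auto simp: bounded_iff)
  have cpt: "compact (cball (0::real) M)" by simp
  have nb: "filtermap g U \<noteq> bot" using npu_proper[OF U] by (simp add: filtermap_bot_iff)
  have ev: "eventually (\<lambda>x. x \<in> cball 0 M) (filtermap g U)"
    using M by (simp add: eventually_filtermap dist_real_def)
  obtain l where l: "inf (nhds l) (filtermap g U) \<noteq> bot"
    using cpt[unfolded compact_filter] nb ev by blast
  have "(g \<longlongrightarrow> l) U"
    unfolding tendsto_def
  proof (intro allI impI)
    fix S :: "real set" assume S: "open S" "l \<in> S"
    have "eventually (\<lambda>m. g m \<in> S) U \<or> eventually (\<lambda>m. \<not> g m \<in> S) U"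
      using U unfolding nonprincipal_ultrafilter_def by blast
    moreover have "\<not> eventually (\<lambda>m. \<not> g m \<in> S) U"
    proof
      assume a: "eventually (\<lambda>m. \<not> g m \<in> S) U"
      have "eventually (\<lambda>x. x \<in> S) (nhds l)" using S by (rule eventually_nhds_in_open)
      moreover have "eventually (\<lambda>x. x \<notin> S) (filtermap g U)" using a by (simp add: eventually_filtermap)
      ultimately have "eventually (\<lambda>x. False) (inf (nhds l) (filtermap g U))"
        unfolding eventually_inf by blast
      thus False using l by (simp add: eventually_False)
    qed
    ultimately show "eventually (\<lambda>m. g m \<in> S) U" by blast
  qed
  thus ?thesis by blast
qed

locale conectx = Metric_space X d for X :: "'a set" and d +
  fixes U :: "nat filter" and b :: "nat \<Rightarrow> 'a" and s :: "nat \<Rightarrow> real"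
  assumes data: "asymptotic_cone_data X U b s"
begin

lemma U_npu: "nonprincipal_ultrafilter U" using data unfolding asymptotic_cone_data_def by blast
lemma U_nb: "U \<noteq> bot" using npu_proper[OF U_npu] .
lemma b_in: "b m \<in> X" using data unfolding asymptotic_cone_data_def by blast
lemma s_pos: "s m > 0" using data unfolding asymptotic_cone_data_def by blast
lemma s_top: "filterlim s at_top sequentially" using data unfolding asymptotic_cone_data_def by blast
lemma U_le: "U \<le> sequentially" using npu_le_seq[OF U_npu] .

abbreviation "CS \<equiv> cone_seqs X d b s"
abbreviation "pd \<equiv> cone_pdist d U s"
abbreviation "CR \<equiv> cone_rel X d U b s"

lemma CS_in: "x \<in> CS \<Longrightarrow> x m \<in> X" unfolding cone_seqs_def by blast

lemma ratio_bdd: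
  assumes x: "x \<in> CS" and y: "y \<in> CS"
  shows "bounded (range (\<lambda>m. d (x m) (y m) / s m))"
proof -
  obtain Mx where Mx: "\<And>m. norm (d (x m) (b m) / s m) \<le> Mx"
    using x unfolding cone_seqs_def bounded_iff by blast
  obtain My where My: "\<And>m. norm (d (y m) (b m) / s m) \<le> My"
    using y unfolding cone_seqs_def bounded_iff by blast
  have "norm (d (x m) (y m) / s m) \<le> Mx + My" for m
  proof -
    have "d (x m) (y m) \<le> d (x m) (b m) + d (y m) (b m)"
      using triangle[OF CS_in[OF x] b_in CS_in[OF y]] commute by simp
    hence "d (x m) (y m) / s m \<le> (d (x m) (b m) + d (y m) (b m)) / s m"
      using s_pos[of m] by (simp add: divide_right_mono)
    hence "d (x m) (y m) / s m \<le> d (x m) (b m) / s m + d (y m) (b m) / s m"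
      by (simp add: add_divide_distrib)
    moreover have "d (x m) (b m) / s m \<le> Mx" "d (y m) (b m) / s m \<le> My"
      using Mx[of m] My[of m] s_pos[of m] by auto
    moreover have "0 \<le> d (x m) (y m) / s m" using s_pos[of m] by simp
    ultimately show ?thesis by simp
  qed
  thus ?thesis unfolding bounded_iff by blast
qed

lemma pd_tendsto:
  assumes x: "x \<in> CS" and y: "y \<in> CS"
  shows "((\<lambda>m. d (x m) (y m) / s m) \<longlongrightarrow> pd x y) U"
proof -
  obtain l where l: "((\<lambda>m. d (x m) (y m) / s m) \<longlongrightarrow> l) U"
    using npu_conv[OF U_npu ratio_bdd[OF x y]] by blast
  have "pd x y = l" unfolding cone_pdist_def ulim_def using tendsto_Lim[OF U_nb l] .
  thus ?thesis using l by simp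
qed

lemma pd_self: assumes "x \<in> CS" shows "pd x x = 0"
proof -
  have "(\<lambda>m. d (x m) (x m) / s m) = (\<lambda>m. 0)" using CS_in[OF assms] by simp
  thus ?thesis unfolding cone_pdist_def ulim_def using tendsto_Lim[OF U_nb tendsto_const] by simp
qed

lemma pd_comm: "pd x y = pd y x" unfolding cone_pdist_def using commute by simp

lemma pd_congr:
  assumes x: "x \<in> CS" and x': "x' \<in> CS" and y: "y \<in> CS" and y': "y' \<in> CS"
    and e1: "pd x x' = 0" and e2: "pd y y' = 0"
  shows "pd x' y' = pd x y"
proof -
  let ?f1 = "\<lambda>m. d (x' m) (y' m) / s m"
  let ?f0 = "\<lambda>m. d (x m) (y m) / s m"
  let ?e1 = "\<lambda>m. d (x m) (x' m) / s m"
  let ?e2 = "\<lambda>m. d (y m) (y' m) / s m"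
  have t: "((\<lambda>m. ?e1 m + ?e2 m - \<bar>?f1 m - ?f0 m\<bar>) \<longlongrightarrow> 0 + 0 - \<bar>pd x' y' - pd x y\<bar>) U"
    using pd_tendsto[OF x x'] pd_tendsto[OF y y'] pd_tendsto[OF x' y'] pd_tendsto[OF x y] e1 e2
    by (intro tendsto_intros) auto
  have "\<forall>m. 0 \<le> ?e1 m + ?e2 m - \<bar>?f1 m - ?f0 m\<bar>"
  proof
    fix m
    have xs: "x m \<in> X" "x' m \<in> X" "y m \<in> X" "y' m \<in> X" using x x' y y' CS_in by auto
    have a: "d (x' m) (y' m) \<le> d (x m) (x' m) + d (x m) (y m) + d (y m) (y' m)"
      using triangle[OF xs(2) xs(1) xs(4)] triangle[OF xs(1) xs(3) xs(4)] commute by smt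
    have b: "d (x m) (y m) \<le> d (x m) (x' m) + d (x' m) (y' m) + d (y m) (y' m)"
      using triangle[OF xs(1) xs(2) xs(3)] triangle[OF xs(2) xs(4) xs(3)] commute by smt
    have "\<bar>d (x' m) (y' m) - d (x m) (y m)\<bar> \<le> d (x m) (x' m) + d (y m) (y' m)" using a b by linarith
    hence "\<bar>d (x' m) (y' m) - d (x m) (y m)\<bar> / s m \<le> (d (x m) (x' m) + d (y m) (y' m)) / s m"
      using s_pos[of m] by (simp add: divide_right_mono)
    moreover have "\<bar>?f1 m - ?f0 m\<bar> = \<bar>d (x' m) (y' m) - d (x m) (y m)\<bar> / s m"
      using s_pos[of m] by (simp add: diff_divide_distrib[symmetric])
    ultimately show "0 \<le> ?e1 m + ?e2 m - \<bar>?f1 m - ?f0 m\<bar>" by (simp add: add_divide_distrib)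
  qed
  hence "eventually (\<lambda>m. 0 \<le> ?e1 m + ?e2 m - \<bar>?f1 m - ?f0 m\<bar>) U" by (simp add: always_eventually)
  hence "0 \<le> 0 + 0 - \<bar>pd x' y' - pd x y\<bar>"
    using tendsto_lowerbound[OF t _ U_nb] by blast
  thus ?thesis by simp
qed

lemma in_class: "x \<in> CS \<Longrightarrow> x \<in> CR `` {x}"
  unfolding cone_rel_def using pd_self by simp

lemma cone_dist_class:
  assumes x: "x \<in> CS" and y: "y \<in> CS"
  shows "cone_dist d U s (CR `` {x}) (CR `` {y}) = pd x y"
proof -
  define x' where "x' = (SOME z. z \<in> CR `` {x})"
  define y' where "y' = (SOME z. z \<in> CR `` {y})"
  have "x' \<in> CR `` {x}" unfolding x'_def using in_class[OF x] by (rule someI[where P="\<lambda>z. z \<in> CR `` {x}"])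
  hence x': "x' \<in> CS" "pd x x' = 0" unfolding cone_rel_def by auto
  have "y' \<in> CR `` {y}" unfolding y'_def using in_class[OF y] by (rule someI[where P="\<lambda>z. z \<in> CR `` {y}"])
  hence y': "y' \<in> CS" "pd y y' = 0" unfolding cone_rel_def by auto
  have "cone_dist d U s (CR `` {x}) (CR `` {y}) = pd x' y'"
    unfolding cone_dist_def x'_def y'_def ..
  also have "\<dots> = pd x y" using pd_congr[OF x x'(1) y y'(1) x'(2) y'(2)] .
  finally show ?thesis .
qed

lemma class_in_cone: "x \<in> CS \<Longrightarrow> CR `` {x} \<in> asymptotic_cone X d U b s"
  unfolding asymptotic_cone_def by (rule quotientI)

lemma cone_elem: "A \<in> asymptotic_cone X d U b s \<Longrightarrow> \<exists>x\<in>CS. A = CR `` {x}"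
  unfolding asymptotic_cone_def by (erule quotientE) blast

end

lemma circle_dist_scaled':
  assumes "lam \<ge> 0"
  shows "circle_dist (real n * lam) (real i * lam) (real j * lam) = scaled_cycle_dist lam n i j"
proof -
  have "\<bar>real i * lam - real j * lam\<bar> = lam * \<bar>real i - real j\<bar>"
    using assms by (simp add: abs_mult left_diff_distrib[symmetric])
  moreover have "real n * lam - lam * \<bar>real i - real j\<bar> = lam * (real n - \<bar>real i - real j\<bar>)"
    by (simp add: algebra_simps)
  ultimately show ?thesis
    unfolding circle_dist_def scaled_cycle_dist_def using assms
    by (simp add: min_mult_distrib_left)
qed

lemma L2:
  assumes ms: "Metric_space X d" and cc: "cone_contains_unit_circle X d"
  shows "approximates_ngons X d"
proof -
  obtain U b s f where data: "asymptotic_cone_data X U b s"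
    and fin: "f ` circle_pts 1 \<subseteq> asymptotic_cone X d U b s"
    and fd: "\<forall>p\<in>circle_pts 1. \<forall>q\<in>circle_pts 1. cone_dist d U s (f p) (f q) = circle_dist 1 p q"
    using cc unfolding cone_contains_unit_circle_def by blast
  interpret conectx X d U b s by (intro conectx.intro conectx_axioms.intro ms data)
  show ?thesis unfolding approximates_ngons_def
  proof (intro allI impI)
    fix K :: real and n :: nat and Lam :: real
    assume K: "K > 1" and n: "n \<ge> 1"
    have npos: "real n > 0" using n by simp
    define tt where "tt i = real i / real n" for i :: nat
    have tt_in: "tt i \<in> circle_pts 1" if "i < n" for i
      using that npos by (simp add: tt_def circle_pts_def)
    define xs where "xs i = (SOME x. x \<in> CS \<and> f (tt i) = CR `` {x})" for i
    have xs: "xs i \<in> CS \<and> f (tt i) = CR `` {xs i}" if "i < n" for i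
    proof -
      have "f (tt i) \<in> asymptotic_cone X d U b s" using fin tt_in[OF that] by blast
      hence "\<exists>x. x \<in> CS \<and> f (tt i) = CR `` {x}" using cone_elem by blast
      thus ?thesis unfolding xs_def by (rule someI_ex)
    qed
    define sg where "sg i j = scaled_cycle_dist (1 / real n) n i j" for i j
    have pdx: "pd (xs i) (xs j) = sg i j" if "i < n" "j < n" for i j
    proof -
      have "pd (xs i) (xs j) = cone_dist d U s (f (tt i)) (f (tt j))"
        using cone_dist_class xs that by metis
      also have "\<dots> = circle_dist 1 (tt i) (tt j)" using fd tt_in that by blast
      also have "\<dots> = circle_dist (real n * (1 / real n)) (real i * (1 / real n)) (real j * (1 / real n))"
        using npos by (simp add: tt_def)
      also have "\<dots> = sg i j" unfolding sg_def by (rule circle_dist_scaled') simp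
      finally show ?thesis .
    qed
    have sgpos: "sg i j > 0" if "i < n" "j < n" "i \<noteq> j" for i j
    proof -
      have "min \<bar>real i - real j\<bar> (real n - \<bar>real i - real j\<bar>) \<ge> 1"
        using that by (auto simp: min_def abs_if)
      hence "min \<bar>real i - real j\<bar> (real n - \<bar>real i - real j\<bar>) > 0" by linarith
      thus ?thesis using npos unfolding sg_def scaled_cycle_dist_def by simp
    qed
    have ev1: "eventually (\<lambda>m. \<forall>i\<in>{..<n}. \<forall>j\<in>{..<n}. i \<noteq> j \<longrightarrow>
        sg i j / K < d (xs i m) (xs j m) / s m \<and> d (xs i m) (xs j m) / s m < K * sg i j) U"
    proof (intro eventually_ball_finite ballI)
      fix i j assume i: "i \<in> {..<n}" and j: "j \<in> {..<n}"
      show "eventually (\<lambda>m. i \<noteq> j \<longrightarrow> sg i j / K < d (xs i m) (xs j m) / s m \<and>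
          d (xs i m) (xs j m) / s m < K * sg i j) U"
      proof (cases "i = j")
        case True thus ?thesis by simp
      next
        case False
        have tl: "((\<lambda>m. d (xs i m) (xs j m) / s m) \<longlongrightarrow> sg i j) U"
          using pd_tendsto[of "xs i" "xs j"] xs pdx i j by auto
        have sp: "sg i j > 0" using sgpos i j False by auto
        have "sg i j / K < sg i j" using sp K by (simp add: divide_less_eq)
        moreover have "sg i j < K * sg i j" using sp K by simp
        ultimately have "eventually (\<lambda>m. sg i j / K < d (xs i m) (xs j m) / s m) U"
          "eventually (\<lambda>m. d (xs i m) (xs j m) / s m < K * sg i j) U"
          using order_tendstoD[OF tl] by auto
        thus ?thesis by eventually_elim auto
      qed
    qed auto
    have ev2: "eventually (\<lambda>m. s m > real n * max Lam 0) U"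
    proof -
      have "eventually (\<lambda>m. real n * max Lam 0 + 1 \<le> s m) sequentially"
        using s_top unfolding filterlim_at_top by blast
      hence "eventually (\<lambda>m. real n * max Lam 0 + 1 \<le> s m) U" using U_le by (simp add: le_filter_def)
      thus ?thesis by (rule eventually_mono) simp
    qed
    obtain m where m1: "\<forall>i\<in>{..<n}. \<forall>j\<in>{..<n}. i \<noteq> j \<longrightarrow>
        sg i j / K < d (xs i m) (xs j m) / s m \<and> d (xs i m) (xs j m) / s m < K * sg i j"
      and m2: "s m > real n * max Lam 0"
      using eventually_happens[OF eventually_conj[OF ev1 ev2]] U_nb by blast
    define lam where "lam = s m / real n"
    have "real n * Lam \<le> real n * max Lam 0" using npos by (intro mult_left_mono) auto
    hence "Lam * real n < s m" using m2 by (simp add: mult.commute)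
    hence lamL: "lam > Lam" using npos unfolding lam_def by (simp add: field_simps)
    have sc: "scaled_cycle_dist lam n i j = s m * sg i j" for i j
      unfolding sg_def scaled_cycle_dist_def lam_def by simp
    have "bilipschitz_embedding (cycle_verts n) (scaled_cycle_dist lam n) X d K (\<lambda>i. xs i m)"
      unfolding bilipschitz_embedding_def
    proof (rule conjI, goal_cases)
      case 1 show ?case using xs CS_in by (auto simp: cycle_verts_def)
    next
      case 2 show ?case
      proof (intro ballI)
        fix i j assume i: "i \<in> cycle_verts n" and j: "j \<in> cycle_verts n"
        hence ij: "i < n" "j < n" by (auto simp: cycle_verts_def)
        show "1 / K * scaled_cycle_dist lam n i j \<le> d (xs i m) (xs j m) \<and>
              d (xs i m) (xs j m) \<le> K * scaled_cycle_dist lam n i j"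
        proof (cases "i = j")
          case True
          have "d (xs j m) (xs j m) = 0" using CS_in xs ij by simp
          thus ?thesis using True by (simp add: scaled_cycle_dist_def)
        next
          case False
          have r: "sg i j / K < d (xs i m) (xs j m) / s m" "d (xs i m) (xs j m) / s m < K * sg i j"
            using m1 ij False by auto
          have sm: "s m > 0" by (rule s_pos)
          have "s m * (sg i j / K) \<le> s m * (d (xs i m) (xs j m) / s m)"
            using r(1) sm by (intro mult_left_mono) auto
          hence a: "1 / K * (s m * sg i j) \<le> d (xs i m) (xs j m)" using sm by simp
          have "s m * (d (xs i m) (xs j m) / s m) \<le> s m * (K * sg i j)"
            using r(2) sm by (intro mult_left_mono) auto
          hence b: "d (xs i m) (xs j m) \<le> K * (s m * sg i j)" using sm by (simp add: algebra_simps)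
          show ?thesis using a b sc by simp
        qed
      qed
    qed
    thus "\<exists>lam>Lam. \<exists>f. bilipschitz_embedding (cycle_verts n) (scaled_cycle_dist lam n) X d K f"
      using lamL by blast
  qed
qed

lemma cd_scale:
  assumes "c > 0"
  shows "circle_dist c (t * c) (t' * c) = c * circle_dist 1 t t'"
proof -
  have "\<bar>t * c - t' * c\<bar> = c * \<bar>t - t'\<bar>" using assms by (simp add: abs_mult left_diff_distrib[symmetric])
  moreover have "c - c * \<bar>t - t'\<bar> = c * (1 - \<bar>t - t'\<bar>)" by (simp add: algebra_simps)
  ultimately show ?thesis unfolding circle_dist_def using assms by (simp add: min_mult_distrib_left)
qed

lemma cd_antipode:
  assumes c: "c > 0" and p: "0 \<le> p" "p < c" and q: "0 \<le> q" "q < c"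
  defines "qb \<equiv> (if q < c / 2 then q + c / 2 else q - c / 2)"
  shows "0 \<le> qb" "qb < c" "circle_dist c q qb = c / 2" "circle_dist c p qb = c / 2 - circle_dist c p q"
  using assms unfolding circle_dist_def qb_def by (auto simp: min_def abs_if)

lemma almost_lower:
  assumes ms: "Metric_space X d" and rc: "R_circle X d R c \<alpha>" and ai: "almost_isometric d K c \<alpha>"
    and p: "p \<in> circle_pts c" and q: "q \<in> circle_pts c"
  shows "d (\<alpha> p) (\<alpha> q) \<ge> circle_dist c p q + (1 / K) * (c / 2) - c / 2 - R"
proof -
  have c: "c > 0" and inX: "\<alpha> ` circle_pts c \<subseteq> X"
    and up: "\<forall>p\<in>circle_pts c. \<forall>q\<in>circle_pts c. d (\<alpha> p) (\<alpha> q) \<le> circle_dist c p q + R"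
    using rc unfolding R_circle_def by auto
  have pq: "0 \<le> p" "p < c" "0 \<le> q" "q < c" using p q by (auto simp: circle_pts_def)
  define qb where "qb = (if q < c / 2 then q + c / 2 else q - c / 2)"
  note A = cd_antipode[OF c pq, folded qb_def]
  have qbin: "qb \<in> circle_pts c" using A by (simp add: circle_pts_def)
  have "(1 / K) * (c / 2) \<le> d (\<alpha> q) (\<alpha> qb)" using ai q qbin A(3) unfolding almost_isometric_def by blast
  also have "\<dots> \<le> d (\<alpha> q) (\<alpha> p) + d (\<alpha> p) (\<alpha> qb)"
    using Metric_space.triangle[OF ms] inX p q qbin by blast
  also have "\<dots> \<le> d (\<alpha> p) (\<alpha> q) + (circle_dist c p qb + R)"
    using up p qbin Metric_space.commute[OF ms] by (metis add_left_mono)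
  finally show ?thesis using A(4) by simp
qed

lemma L1:
  assumes ms: "Metric_space X d" and R0: "R \<ge> 0" and nss: "\<not> strongly_shortcut X d R"
  shows "cone_contains_unit_circle X d"
proof -
  have H: "\<forall>K>1. \<forall>B. \<exists>c \<alpha>. R_circle X d R c \<alpha> \<and> almost_isometric d K c \<alpha> \<and> c > B"
    using nss unfolding strongly_shortcut_def by (meson not_le)
  define Km where "Km m = 1 + 1 / (real m + 1)" for m :: nat
  have Km1: "Km m > 1" for m by (simp add: Km_def)
  define pr where "pr m = (SOME ca. R_circle X d R (fst ca) (snd ca) \<and> almost_isometric d (Km m) (fst ca) (snd ca)
      \<and> fst ca > real m + 1)" for m
  define cs where "cs m = fst (pr m)" for m
  define al where "al m = snd (pr m)" for m
  have pr: "R_circle X d R (cs m) (al m) \<and> almost_isometric d (Km m) (cs m) (al m) \<and> cs m > real m + 1" for m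
  proof -
    obtain c \<alpha> where "R_circle X d R c \<alpha> \<and> almost_isometric d (Km m) c \<alpha> \<and> c > real m + 1"
      using H Km1 by blast
    hence "\<exists>ca. R_circle X d R (fst ca) (snd ca) \<and> almost_isometric d (Km m) (fst ca) (snd ca)
      \<and> fst ca > real m + 1" by (intro exI[of _ "(c, \<alpha>)"]) simp
    thus ?thesis unfolding cs_def al_def pr_def by (rule someI_ex)
  qed
  have cs1: "cs m > real m + 1" for m using pr by blast
  have cspos: "cs m > 0" for m using cs1[of m] by linarith
  have alX: "al m ` circle_pts (cs m) \<subseteq> X" for m using pr unfolding R_circle_def by blast
  have alup: "\<And>p q. p \<in> circle_pts (cs m) \<Longrightarrow> q \<in> circle_pts (cs m) \<Longrightarrow>
      d (al m p) (al m q) \<le> circle_dist (cs m) p q + R" for m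
    using pr unfolding R_circle_def by blast
  obtain U where U: "nonprincipal_ultrafilter U" using ex_npu by blast
  define b where "b m = al m 0" for m
  have zin: "0 \<in> circle_pts (cs m)" for m using cspos by (simp add: circle_pts_def)
  have tin: "t * cs m \<in> circle_pts (cs m)" if "0 \<le> t" "t < 1" for t m
    using that cspos[of m] by (simp add: circle_pts_def)
  have data: "asymptotic_cone_data X U b cs"
    unfolding asymptotic_cone_data_def
  proof (intro conjI allI)
    show "nonprincipal_ultrafilter U" by (rule U)
    show "b m \<in> X" for m using alX zin unfolding b_def by blast
    show "cs m > 0" for m by (rule cspos)
    show "filterlim cs at_top sequentially"
    proof (rule filterlim_at_top_mono[OF filterlim_real_sequentially])
      have "\<forall>m. real m \<le> cs m" using cs1 by (metis less_add_one less_imp_le order.strict_trans)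
      thus "\<forall>\<^sub>F m in sequentially. real m \<le> cs m" by (simp add: always_eventually)
    qed
  qed
  interpret conectx X d U b cs by (intro conectx.intro conectx_axioms.intro ms data)
  define x where "x t = (\<lambda>m. al m (t * cs m))" for t
  have ratio: "\<bar>d (x t m) (x t' m) / cs m - circle_dist 1 t t'\<bar> \<le> (1 + R) / (real m + 1)"
    if t: "0 \<le> t" "t < 1" and t': "0 \<le> t'" "t' < 1" for t t' m
  proof -
    have c: "cs m > 0" by (rule cspos)
    have cd: "circle_dist (cs m) (t * cs m) (t' * cs m) = cs m * circle_dist 1 t t'"
      by (rule cd_scale[OF c])
    have up: "d (x t m) (x t' m) \<le> cs m * circle_dist 1 t t' + R"
      using alup[of "t * cs m" m "t' * cs m", OF tin[OF t] tin[OF t']] cd unfolding x_def by simp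
    have lo: "d (x t m) (x t' m) \<ge> cs m * circle_dist 1 t t' + (1 / Km m) * (cs m / 2) - cs m / 2 - R"
      using almost_lower[where \<alpha>="al m" and K="Km m" and c="cs m" and R=R, OF ms _ _ tin[OF t] tin[OF t']] pr[of m] cd unfolding x_def by simp
    have Rc: "R / cs m \<le> R / (real m + 1)"
      using R0 cs1[of m] by (intro divide_left_mono) auto
    have kk: "1 / 2 - (1 / Km m) / 2 \<le> 1 / (real m + 1)"
    proof -
      have km: "1 / Km m = (real m + 1) / (real m + 2)" unfolding Km_def by (simp add: field_simps)
      have "1 / 2 - ((real m + 1) / (real m + 2)) / 2 = 1 / (2 * (real m + 2))" by (simp add: field_simps)
      hence "1 / 2 - (1 / Km m) / 2 = 1 / (2 * (real m + 2))" by (simp only: km)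
      also have "\<dots> \<le> 1 / (real m + 1)" by (simp add: field_simps)
      finally show ?thesis .
    qed
    have "d (x t m) (x t' m) / cs m \<le> (cs m * circle_dist 1 t t' + R) / cs m"
      using up c by (simp add: divide_right_mono)
    moreover have "(cs m * circle_dist 1 t t' + R) / cs m = circle_dist 1 t t' + R / cs m"
      using c by (simp add: field_simps)
    ultimately have e1: "d (x t m) (x t' m) / cs m \<le> circle_dist 1 t t' + R / cs m" by simp
    have "d (x t m) (x t' m) / cs m \<ge> (cs m * circle_dist 1 t t' + (1 / Km m) * (cs m / 2) - cs m / 2 - R) / cs m"
      using lo c by (simp add: divide_right_mono)
    moreover have "(cs m * circle_dist 1 t t' + (1 / Km m) * (cs m / 2) - cs m / 2 - R) / cs m
        = circle_dist 1 t t' + (1 / Km m) / 2 - 1 / 2 - R / cs m"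
      using c by (simp add: field_simps)
    ultimately have e2: "d (x t m) (x t' m) / cs m \<ge> circle_dist 1 t t' + (1 / Km m) / 2 - 1 / 2 - R / cs m"
      by simp
    have "R / (real m + 1) + 1 / (real m + 1) = (1 + R) / (real m + 1)" by (simp add: field_simps)
    moreover have "0 \<le> 1 / (real m + 1)" by simp
    ultimately show ?thesis unfolding abs_le_iff using e1 e2 Rc kk R0 by (intro conjI; linarith)
  qed
  have xCS: "x t \<in> CS" if "0 \<le> t" "t < 1" for t
    unfolding cone_seqs_def
  proof (intro CollectI conjI allI)
    show "x t m \<in> X" for m using alX tin[OF that] unfolding x_def by blast
    have "x 0 = b" unfolding x_def b_def by simp
    have "norm (d (x t m) (b m) / cs m) \<le> 1 + (1 + R)" for m
    proof -
      have "\<bar>d (x t m) (x 0 m) / cs m - circle_dist 1 t 0\<bar> \<le> (1 + R) / (real m + 1)"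
        using ratio that by simp
      moreover have "(1 + R) / (real m + 1) \<le> 1 + R" using R0 by (simp add: divide_le_eq)
      moreover have "circle_dist 1 t 0 \<le> 1" unfolding circle_dist_def using that by simp
      moreover have "circle_dist 1 t 0 \<ge> 0" unfolding circle_dist_def using that by simp
      moreover have "d (x t m) (b m) / cs m \<ge> 0" using cspos[of m] by simp
      moreover have "\<bar>cs m\<bar> = cs m" using cspos[of m] by simp
      ultimately show ?thesis using \<open>x 0 = b\<close> by (simp add: abs_le_iff)
    qed
    thus "bounded (range (\<lambda>m. d (x t m) (b m) / cs m))" unfolding bounded_iff by blast
  qed
  have lim0: "(\<lambda>m. (1 + R) / (real m + 1)) \<longlonglongrightarrow> 0"
    using LIMSEQ_Suc[OF lim_const_over_n[of "1 + R"]] by (simp add: add.commute)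
  have pdx: "pd (x t) (x t') = circle_dist 1 t t'" if t: "0 \<le> t" "t < 1" and t': "0 \<le> t'" "t' < 1" for t t'
  proof -
    have "(\<lambda>m. d (x t m) (x t' m) / cs m) \<longlonglongrightarrow> circle_dist 1 t t'"
    proof (rule real_tendsto_sandwich)
      show "eventually (\<lambda>m. circle_dist 1 t t' - (1 + R) / (real m + 1) \<le> d (x t m) (x t' m) / cs m) sequentially"
        using ratio[OF t t'] by (simp add: abs_le_iff algebra_simps)
      show "eventually (\<lambda>m. d (x t m) (x t' m) / cs m \<le> circle_dist 1 t t' + (1 + R) / (real m + 1)) sequentially"
        using ratio[OF t t'] by (simp add: abs_le_iff algebra_simps)
      show "(\<lambda>m. circle_dist 1 t t' - (1 + R) / (real m + 1)) \<longlonglongrightarrow> circle_dist 1 t t'"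
        using tendsto_diff[OF tendsto_const lim0] by simp
      show "(\<lambda>m. circle_dist 1 t t' + (1 + R) / (real m + 1)) \<longlonglongrightarrow> circle_dist 1 t t'"
        using tendsto_add[OF tendsto_const lim0] by simp
    qed
    hence "((\<lambda>m. d (x t m) (x t' m) / cs m) \<longlongrightarrow> circle_dist 1 t t') U" using U_le by (rule tendsto_mono[rotated])
    thus ?thesis unfolding cone_pdist_def ulim_def by (rule tendsto_Lim[OF U_nb])
  qed
  define Fc where "Fc t = CR `` {x t}" for t
  show ?thesis unfolding cone_contains_unit_circle_def
  proof (intro exI conjI)
    show "asymptotic_cone_data X U b cs" by (rule data)
    show "Fc ` circle_pts 1 \<subseteq> asymptotic_cone X d U b cs"
      using class_in_cone xCS unfolding Fc_def circle_pts_def by auto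
    show "\<forall>p\<in>circle_pts 1. \<forall>q\<in>circle_pts 1. cone_dist d U cs (Fc p) (Fc q) = circle_dist 1 p q"
      using cone_dist_class xCS pdx unfolding Fc_def circle_pts_def by auto
  qed
qed

locale polyQ = polyP +
  fixes L0 :: real
  assumes L0: "L0 > 1" and n4: "n \<ge> 4"
begin

definition Psi :: "nat \<Rightarrow> real \<Rightarrow> real \<Rightarrow> real" where
  "Psi k s t = (ell k - s) + t - L0 * d (gam k s) (gam (Suc k) t)"

definition box :: "nat \<Rightarrow> (real \<times> real) set" where
  "box k = {0..ell k} \<times> {0..ell (Suc k)}"

definition goodcut :: "nat \<Rightarrow> real \<times> real \<Rightarrow> bool" where
  "goodcut k p \<longleftrightarrow> p \<in> box k \<and> (\<forall>q\<in>box k. Psi k (fst q) (snd q) \<le> Psi k (fst p) (snd p) + 3 * R * L0)"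

lemma Psi_le: "q \<in> box k \<Longrightarrow> Psi k (fst q) (snd q) \<le> ell k + ell (Suc k)"
proof -
  assume q: "q \<in> box k"
  have "0 \<le> L0 * d (gam k (fst q)) (gam (Suc k) (snd q))" using L0 by simp
  thus ?thesis using q unfolding Psi_def box_def by auto
qed

lemma cut_ex: "\<exists>p. goodcut k p"
proof (cases "R > 0")
  case True
  let ?f = "\<lambda>q. Psi k (fst q) (snd q)"
  have ne: "box k \<noteq> {}" using ell_nonneg unfolding box_def by auto
  have bdd: "bdd_above (?f ` box k)" using Psi_le by (intro bdd_aboveI[of _ "ell k + ell (Suc k)"]) auto
  have "Sup (?f ` box k) - 3 * R * L0 < Sup (?f ` box k)" using True L0 by simp
  then obtain p where p: "p \<in> box k" "Sup (?f ` box k) - 3 * R * L0 < ?f p"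
    using less_cSup_iff[of "?f ` box k"] ne bdd by auto
  have "\<forall>q\<in>box k. ?f q \<le> ?f p + 3 * R * L0"
  proof
    fix q assume "q \<in> box k"
    hence "?f q \<le> Sup (?f ` box k)" using bdd by (intro cSup_upper) auto
    thus "?f q \<le> ?f p + 3 * R * L0" using p by simp
  qed
  thus ?thesis using p unfolding goodcut_def by blast
next
  case False
  hence R00: "R = 0" using R0 by simp
  let ?f = "\<lambda>q. Psi k (fst q) (snd q)"
  have ne: "box k \<noteq> {}" using ell_nonneg unfolding box_def by auto
  have cpt: "compact (box k)" unfolding box_def by (intro compact_Times) auto
  have lip: "(2 * (1 + L0))-lipschitz_on (box k) ?f"
  proof (rule lipschitz_onI)
    show "0 \<le> 2 * (1 + L0)" using L0 by simp
    fix x y assume x: "x \<in> box k" and y: "y \<in> box k"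
    have g1: "d (gam k (fst x)) (gam k (fst y)) \<le> \<bar>fst x - fst y\<bar>"
      using gam_props(4)[of "fst x" k "fst y"] x y R00 unfolding box_def by auto
    have g2: "d (gam (Suc k) (snd x)) (gam (Suc k) (snd y)) \<le> \<bar>snd x - snd y\<bar>"
      using gam_props(4)[of "snd x" "Suc k" "snd y"] x y R00 unfolding box_def by auto
    have inX: "gam k (fst x) \<in> X" "gam k (fst y) \<in> X" "gam (Suc k) (snd x) \<in> X" "gam (Suc k) (snd y) \<in> X"
      using gam_props(3) x y unfolding box_def by auto
    have "\<bar>d (gam k (fst x)) (gam (Suc k) (snd x)) - d (gam k (fst y)) (gam (Suc k) (snd y))\<bar>
          \<le> d (gam k (fst x)) (gam k (fst y)) + d (gam (Suc k) (snd x)) (gam (Suc k) (snd y))"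
      using triangle[OF inX(1) inX(2) inX(3)] triangle[OF inX(2) inX(4) inX(3)]
        triangle[OF inX(2) inX(1) inX(4)] triangle[OF inX(1) inX(3) inX(4)] commute
      by (smt (verit))
    also have "\<dots> \<le> dist x y + dist x y"
      using g1 g2 dist_fst_le[of x y] dist_snd_le[of x y] by (simp add: dist_real_def)
    finally have dd: "\<bar>d (gam k (fst x)) (gam (Suc k) (snd x)) - d (gam k (fst y)) (gam (Suc k) (snd y))\<bar>
          \<le> 2 * dist x y" by simp
    have "\<bar>?f x - ?f y\<bar> \<le> \<bar>fst x - fst y\<bar> + \<bar>snd x - snd y\<bar>
        + L0 * \<bar>d (gam k (fst x)) (gam (Suc k) (snd x)) - d (gam k (fst y)) (gam (Suc k) (snd y))\<bar>"
    proof -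
      have "?f x - ?f y = (fst y - fst x) + (snd x - snd y)
         - L0 * (d (gam k (fst x)) (gam (Suc k) (snd x)) - d (gam k (fst y)) (gam (Suc k) (snd y)))"
        unfolding Psi_def by (simp add: algebra_simps)
      moreover have "\<bar>L0 * (d (gam k (fst x)) (gam (Suc k) (snd x)) - d (gam k (fst y)) (gam (Suc k) (snd y)))\<bar>
          = L0 * \<bar>d (gam k (fst x)) (gam (Suc k) (snd x)) - d (gam k (fst y)) (gam (Suc k) (snd y))\<bar>"
        using L0 by (simp add: abs_mult)
      ultimately show ?thesis by (smt (verit))
    qed
    also have "\<dots> \<le> dist x y + dist x y + L0 * (2 * dist x y)"
      using dist_fst_le[of x y] dist_snd_le[of x y] dd L0
      by (intro add_mono mult_left_mono) (auto simp: dist_real_def)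
    finally show "dist (?f x) (?f y) \<le> 2 * (1 + L0) * dist x y" by (simp add: dist_real_def algebra_simps)
  qed
  obtain p where p: "p \<in> box k" "\<forall>q\<in>box k. ?f q \<le> ?f p"
    using continuous_attains_sup[OF cpt ne lipschitz_on_continuous_on[OF lip]] by blast
  have z: "3 * R * L0 = 0" using R00 by simp
  have "goodcut k p" unfolding goodcut_def z using p by simp
  thus ?thesis by blast
qed

definition cut :: "nat \<Rightarrow> real \<times> real" where "cut k = (SOME p. goodcut k p)"
definition cs :: "nat \<Rightarrow> real" where "cs k = fst (cut k)"
definition ct :: "nat \<Rightarrow> real" where "ct k = snd (cut k)"

lemma cut_good: "goodcut k (cut k)" unfolding cut_def using cut_ex by (rule someI_ex)

lemma cs_ct_range: "0 \<le> cs k" "cs k \<le> ell k" "0 \<le> ct k" "ct k \<le> ell (Suc k)"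
  using cut_good[of k] unfolding goodcut_def box_def cs_def ct_def by auto

lemma Psi_opt: "s \<in> {0..ell k} \<Longrightarrow> t \<in> {0..ell (Suc k)} \<Longrightarrow> Psi k s t \<le> Psi k (cs k) (ct k) + 3 * R * L0"
  using cut_good[of k] unfolding goodcut_def box_def cs_def ct_def by force

definition a :: "nat \<Rightarrow> 'a" where "a k = gam k (cs k)"
definition bb :: "nat \<Rightarrow> 'a" where "bb k = gam (Suc k) (ct k)"
definition mm :: "nat \<Rightarrow> real" where "mm k = d (a k) (bb k)"

lemma a_in: "a k \<in> X" unfolding a_def using gam_props(3) cs_ct_range by auto
lemma bb_in: "bb k \<in> X" unfolding bb_def using gam_props(3) cs_ct_range by auto
lemma mm_nonneg: "mm k \<ge> 0" unfolding mm_def by simp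

definition ch :: "nat \<Rightarrow> real \<Rightarrow> 'a" where
  "ch k = (SOME h. rough_geodesic X d R (a k) (bb k) h)"

lemma ch_rg: "rough_geodesic X d R (a k) (bb k) (ch k)"
proof -
  have "\<exists>h. rough_geodesic X d R (a k) (bb k) h"
    using rg a_in bb_in unfolding rough_geodesic_space_def by blast
  thus ?thesis unfolding ch_def by (rule someI_ex)
qed

lemma ch_props:
  shows "ch k 0 = a k" "ch k (mm k) = bb k"
    and "\<And>r. r \<in> {0..mm k} \<Longrightarrow> ch k r \<in> X"
    and "\<And>r r'. r \<in> {0..mm k} \<Longrightarrow> r' \<in> {0..mm k} \<Longrightarrow> d (ch k r) (ch k r') \<le> \<bar>r - r'\<bar> + R"
    and "\<And>r r'. r \<in> {0..mm k} \<Longrightarrow> r' \<in> {0..mm k} \<Longrightarrow> \<bar>r - r'\<bar> - R \<le> d (ch k r) (ch k r')"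
  using ch_rg[of k] unfolding rough_geodesic_def rough_isometric_embedding_def mm_def
  by auto

end

lemma cycd_2: assumes "n \<ge> 4" shows "cycd n k (Suc (Suc k)) = 2"
proof -
  have kn: "k mod n < n" using assms by simp
  have e: "Suc (Suc k) mod n = (k mod n + 2) mod n" by (metis mod_add_left_eq add_2_eq_Suc')
  consider "k mod n + 2 < n" | "k mod n + 2 = n" | "k mod n + 2 = n + 1" using kn by linarith
  thus ?thesis
  proof cases
    case 1 thus ?thesis using e assms unfolding cycd_def by (simp add: min_def)
  next
    case 2
    hence "Suc (Suc k) mod n = 0" using e by simp
    thus ?thesis using 2 assms unfolding cycd_def by (simp add: min_def of_nat_diff)
  next
    case 3
    hence "(k mod n + 2) mod n = 1" using assms by (metis mod_add_self1 mod_less one_less_numeral_iff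
          semiring_norm(76) less_le_trans numeral_le_iff semiring_norm(69) add.commute)
    hence "Suc (Suc k) mod n = 1" using e by simp
    thus ?thesis using 3 assms unfolding cycd_def by (simp add: min_def)
  qed
qed

lemma cycd_1: assumes "n \<ge> 2" shows "cycd n k (Suc k) = 1"
proof -
  have kn: "k mod n < n" using assms by simp
  show ?thesis
  proof (cases "Suc (k mod n) = n")
    case True
    hence "Suc k mod n = 0" by (metis mod_Suc)
    thus ?thesis using True assms unfolding cycd_def by (simp add: min_def)
  next
    case False
    hence "Suc k mod n = Suc (k mod n)" by (metis mod_Suc)
    thus ?thesis using False kn assms unfolding cycd_def by (simp add: min_def)
  qed
qed

context polyQ begin

lemma Psi_cut: "Psi k (cs k) (ct k) = ell k - cs k + ct k - L0 * mm k"
  unfolding Psi_def mm_def a_def bb_def by simp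

lemma C1:
  assumes s': "0 \<le> s'" "s' \<le> cs k" and r: "0 \<le> r" "r \<le> mm k"
  shows "d (gam k s') (ch k r) \<ge> ((cs k - s') + r) / L0 - 4 * R"
proof -
  have "Psi k s' (ct k) \<le> Psi k (cs k) (ct k) + 3 * R * L0"
    using Psi_opt s' cs_ct_range[of k] by auto
  hence A: "L0 * d (gam k s') (bb k) \<ge> (cs k - s') + L0 * mm k - 3 * R * L0"
    unfolding Psi_cut unfolding Psi_def bb_def by simp
  have inX: "gam k s' \<in> X" "ch k r \<in> X" "bb k \<in> X"
    using gam_props(3) ch_props(3) s' r cs_ct_range[of k] bb_in by auto
  have "d (gam k s') (bb k) \<le> d (gam k s') (ch k r) + d (ch k r) (ch k (mm k))"
    using triangle[OF inX] ch_props(2) by simp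
  also have "\<dots> \<le> d (gam k s') (ch k r) + (mm k - r + R)"
    using ch_props(4)[of r k "mm k"] r by simp
  finally have B0: "d (gam k s') (bb k) \<le> d (gam k s') (ch k r) + (mm k - r + R)" .
  have B1: "L0 * d (gam k s') (bb k) \<le> L0 * (d (gam k s') (ch k r) + (mm k - r + R))"
    using mult_left_mono[OF B0] L0 by simp
  have B2: "L0 * (d (gam k s') (ch k r) + (mm k - r + R)) = L0 * d (gam k s') (ch k r) + L0 * mm k - L0 * r + L0 * R"
    by (simp add: algebra_simps)
  have rr: "L0 * r \<ge> r" using mult_right_mono[of 1 L0 r] r L0 by simp
  have RR: "L0 * (((cs k - s') + r) / L0 - 4 * R) = (cs k - s') + r - 4 * R * L0" using L0 by (simp add: field_simps)
  have "L0 * d (gam k s') (ch k r) \<ge> L0 * (((cs k - s') + r) / L0 - 4 * R)"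
    using A B1 B2 rr RR mult.commute[of R L0] by (simp only: mult.assoc)
  thus ?thesis using L0 by simp
qed

lemma C2:
  assumes r: "0 \<le> r" "r \<le> mm k" and t': "ct k \<le> t'" "t' \<le> ell (Suc k)"
  shows "d (ch k r) (gam (Suc k) t') \<ge> ((mm k - r) + (t' - ct k)) / L0 - 4 * R"
proof -
  have "Psi k (cs k) t' \<le> Psi k (cs k) (ct k) + 3 * R * L0"
    using Psi_opt t' cs_ct_range[of k] by auto
  hence A: "L0 * d (a k) (gam (Suc k) t') \<ge> (t' - ct k) + L0 * mm k - 3 * R * L0"
    unfolding Psi_cut unfolding Psi_def a_def by simp
  have inX: "a k \<in> X" "ch k r \<in> X" "gam (Suc k) t' \<in> X"
    using gam_props(3) ch_props(3) r t' cs_ct_range[of k] a_in by auto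
  have "d (a k) (gam (Suc k) t') \<le> d (ch k 0) (ch k r) + d (ch k r) (gam (Suc k) t')"
    using triangle[OF inX] ch_props(1) by simp
  also have "\<dots> \<le> (r + R) + d (ch k r) (gam (Suc k) t')"
    using ch_props(4)[of 0 k r] r mm_nonneg by simp
  finally have B0: "d (a k) (gam (Suc k) t') \<le> (r + R) + d (ch k r) (gam (Suc k) t')" .
  have B1: "L0 * d (a k) (gam (Suc k) t') \<le> L0 * ((r + R) + d (ch k r) (gam (Suc k) t'))"
    using mult_left_mono[OF B0] L0 by simp
  have B2: "L0 * ((r + R) + d (ch k r) (gam (Suc k) t')) = L0 * r + L0 * R + L0 * d (ch k r) (gam (Suc k) t')"
    by (simp add: algebra_simps)
  have rr: "L0 * (mm k - r) \<ge> mm k - r" using mult_right_mono[of 1 L0 "mm k - r"] r L0 by simp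
  have rr2: "L0 * (mm k - r) = L0 * mm k - L0 * r" by (simp add: algebra_simps)
  have RR: "L0 * (((mm k - r) + (t' - ct k)) / L0 - 4 * R) = (mm k - r) + (t' - ct k) - 4 * R * L0"
    using L0 by (simp add: field_simps)
  have "L0 * d (ch k r) (gam (Suc k) t') \<ge> L0 * (((mm k - r) + (t' - ct k)) / L0 - 4 * R)"
    using A B1 B2 rr rr2 RR mult.commute[of R L0] by (simp only: mult.assoc)
  thus ?thesis using L0 by simp
qed

lemma C3:
  assumes s': "0 \<le> s'" "s' \<le> cs k" and t': "ct k \<le> t'" "t' \<le> ell (Suc k)"
  shows "d (gam k s') (gam (Suc k) t') \<ge> ((cs k - s') + mm k + (t' - ct k)) / L0 - 4 * R"
proof -
  have "Psi k s' t' \<le> Psi k (cs k) (ct k) + 3 * R * L0"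
    using Psi_opt s' t' cs_ct_range[of k] by auto
  hence A: "L0 * d (gam k s') (gam (Suc k) t') \<ge> (cs k - s') + (t' - ct k) + L0 * mm k - 3 * R * L0"
    unfolding Psi_cut unfolding Psi_def by simp
  moreover have "L0 * mm k \<ge> mm k" using mult_right_mono[of 1 L0 "mm k"] mm_nonneg[of k] L0 by simp
  moreover have "3 * R * L0 \<le> 4 * R * L0" using R0 L0 by simp
  moreover have "L0 * (((cs k - s') + mm k + (t' - ct k)) / L0 - 4 * R) = (cs k - s') + mm k + (t' - ct k) - 4 * R * L0"
    using L0 by (simp add: field_simps)
  ultimately have "L0 * d (gam k s') (gam (Suc k) t') \<ge> L0 * (((cs k - s') + mm k + (t' - ct k)) / L0 - 4 * R)"
    by linarith
  thus ?thesis using L0 by simp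
qed

definition rho :: real where "rho = (2 * lam * (K - 1 / K) + 5 * R) * L0 / (L0 - 1)"

lemma ell_lower: "ell k \<ge> lam / K"
  using Y_bounds[of k "Suc k"] cycd_1[of n k] n2 unfolding ell_def by simp

lemma ell_upper: "ell k \<le> K * lam" using ell_le by (simp add: D_def)

lemma cut_small:
  shows "(ell k - cs k) + ct k \<le> rho" and "mm k \<le> ((ell k - cs k) + ct k) / L0 + 3 * R"
proof -
  have "Psi k (ell k) 0 \<le> Psi k (cs k) (ct k) + 3 * R * L0"
    using Psi_opt ell_nonneg by auto
  moreover have "Psi k (ell k) 0 = 0"
    unfolding Psi_def using gam_props(1)[of "Suc k"] gam_props(2)[of k] Y_in by simp
  ultimately have P: "L0 * mm k \<le> (ell k - cs k) + ct k + 3 * R * L0" unfolding Psi_cut by simp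
  thus "mm k \<le> ((ell k - cs k) + ct k) / L0 + 3 * R" using L0 by (simp add: field_simps)
  have inX: "Y k \<in> X" "a k \<in> X" "bb k \<in> X" "Y (Suc (Suc k)) \<in> X" using Y_in a_in bb_in by auto
  have d1: "d (Y k) (a k) \<le> cs k + R"
    using gam_props(4)[of 0 k "cs k"] gam_props(1)[of k] cs_ct_range[of k] unfolding a_def by simp
  have d2: "d (bb k) (Y (Suc (Suc k))) \<le> ell (Suc k) - ct k + R"
    using gam_props(4)[of "ct k" "Suc k" "ell (Suc k)"] gam_props(2)[of "Suc k"] cs_ct_range[of k] unfolding bb_def by simp
  have d0: "d (Y k) (Y (Suc (Suc k))) \<ge> 2 * lam / K"
    using Y_bounds[of k "Suc (Suc k)"] cycd_2[OF n4, of k] by (simp add: mult.commute)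
  have "d (Y k) (Y (Suc (Suc k))) \<le> d (Y k) (a k) + mm k + d (bb k) (Y (Suc (Suc k)))"
    using triangle[OF inX(1) inX(2) inX(4)] triangle[OF inX(2) inX(3) inX(4)] unfolding mm_def by simp
  hence M: "mm k \<ge> (ell k - cs k) + ct k - 2 * lam * (K - 1 / K) - 2 * R"
    using d0 d1 d2 ell_upper[of k] ell_upper[of "Suc k"] by (simp add: algebra_simps)
  have "L0 * ((ell k - cs k) + ct k - 2 * lam * (K - 1 / K) - 2 * R) \<le> L0 * mm k"
    using M L0 by (intro mult_left_mono) auto
  hence "(L0 - 1) * ((ell k - cs k) + ct k) \<le> (2 * lam * (K - 1 / K) + 5 * R) * L0"
    using P by (simp add: algebra_simps)
  thus "(ell k - cs k) + ct k \<le> rho" unfolding rho_def using L0 by (simp add: field_simps)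
qed

lemma rho_nonneg: "rho \<ge> 0"
proof -
  have "1 < K * K" by (rule less_1_mult[OF K1 K1])
  hence "K - 1 / K \<ge> 0" using K1 by (simp add: field_simps)
  thus ?thesis unfolding rho_def using L0 R0 lam0 by (intro divide_nonneg_pos mult_nonneg_nonneg) auto
qed

lemma u_le: "ell k - cs k \<le> rho" and w_le: "ct k \<le> rho"
  using cut_small(1)[of k] cs_ct_range[of k] by auto

lemma mm_le: "mm k \<le> rho + 3 * R"
proof -
  have "((ell k - cs k) + ct k) / L0 \<le> rho / L0" using cut_small(1) L0 by (simp add: divide_right_mono)
  also have "\<dots> \<le> rho" using rho_nonneg L0 mult_left_mono[of 1 L0 rho] by (simp add: divide_le_eq)
  finally show ?thesis using cut_small(2)[of k] by simp
qed

end

locale polyQ2 = polyQ +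
  assumes big: "lam / K > 2 * rho"
begin

definition midl :: "nat \<Rightarrow> real" where "midl k = cs (Suc k) - ct k"
definition UL :: "nat \<Rightarrow> real" where "UL k = mm k + midl k"
definition pos :: "nat \<Rightarrow> real \<Rightarrow> 'a" where
  "pos k \<tau> = (if \<tau> \<le> mm k then ch k \<tau> else gam (Suc k) (ct k + (\<tau> - mm k)))"

lemma midl_lower: "midl k \<ge> lam / K - 2 * rho"
  using ell_lower[of "Suc k"] u_le[of "Suc k"] w_le[of k] unfolding midl_def by simp

lemma midl_upper: "midl k \<le> K * lam"
  using ell_upper[of "Suc k"] cs_ct_range[of "Suc k"] cs_ct_range[of k] unfolding midl_def by simp

lemma midl_pos: "midl k > 0" using midl_lower[of k] big by simp

lemma UL_lower: "UL k \<ge> lam / K - 2 * rho" using midl_lower[of k] mm_nonneg[of k] unfolding UL_def by simp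
lemma UL_upper: "UL k \<le> K * lam + rho + 3 * R" using midl_upper[of k] mm_le[of k] unfolding UL_def by simp
lemma UL_pos: "UL k > 0" using midl_pos[of k] mm_nonneg[of k] unfolding UL_def by simp

lemma pos_mid: "mm k \<le> \<tau> \<Longrightarrow> pos k \<tau> = gam (Suc k) (ct k + (\<tau> - mm k))"
  unfolding pos_def using ch_props(2)[of k] unfolding bb_def by auto

lemma mid_range:
  assumes "mm k \<le> \<tau>" "\<tau> \<le> UL k"
  shows "ct k \<le> ct k + (\<tau> - mm k)" "ct k + (\<tau> - mm k) \<le> cs (Suc k)" "ct k + (\<tau> - mm k) \<in> {0..ell (Suc k)}"
  using assms cs_ct_range[of k] cs_ct_range[of "Suc k"] unfolding UL_def midl_def by auto

lemma pos_in: "0 \<le> \<tau> \<Longrightarrow> \<tau> \<le> UL k \<Longrightarrow> pos k \<tau> \<in> X"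
proof -
  assume t: "0 \<le> \<tau>" "\<tau> \<le> UL k"
  show ?thesis
  proof (cases "\<tau> \<le> mm k")
    case True thus ?thesis unfolding pos_def using ch_props(3) t by auto
  next
    case False thus ?thesis using pos_mid[of k \<tau>] mid_range[of k \<tau>] t gam_props(3) by auto
  qed
qed

lemma PB1:
  assumes t: "0 \<le> \<tau>" "\<tau> \<le> UL k"
  shows "d (pos k \<tau>) (Y (Suc k)) \<le> \<tau> + rho + 2 * R"
proof (cases "\<tau> \<le> mm k")
  case True
  have inX: "ch k \<tau> \<in> X" "a k \<in> X" "Y (Suc k) \<in> X" using ch_props(3) t True a_in Y_in by auto
  have "d (ch k \<tau>) (Y (Suc k)) \<le> d (ch k \<tau>) (ch k 0) + d (a k) (Y (Suc k))"
    using triangle[OF inX] ch_props(1) by simp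
  also have "\<dots> \<le> (\<tau> + R) + (rho + R)"
  proof (intro add_mono)
    show "d (ch k \<tau>) (ch k 0) \<le> \<tau> + R" using ch_props(4)[of \<tau> k 0] t True mm_nonneg by simp
    have "d (a k) (Y (Suc k)) = d (gam k (cs k)) (gam k (ell k))" unfolding a_def using gam_props(2) by simp
    also have "\<dots> \<le> ell k - cs k + R" using gam_props(4)[of "cs k" k "ell k"] cs_ct_range[of k] by simp
    also have "\<dots> \<le> rho + R" using u_le[of k] by simp
    finally show "d (a k) (Y (Suc k)) \<le> rho + R" .
  qed
  finally show ?thesis unfolding pos_def using True by simp
next
  case False
  have "d (pos k \<tau>) (Y (Suc k)) = d (gam (Suc k) (ct k + (\<tau> - mm k))) (gam (Suc k) 0)"
    using pos_mid[of k \<tau>] False gam_props(1) by simp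
  also have "\<dots> \<le> ct k + (\<tau> - mm k) + R"
    using gam_props(4)[of "ct k + (\<tau> - mm k)" "Suc k" 0] mid_range[of k \<tau>] False t ell_nonneg by simp
  also have "\<dots> \<le> \<tau> + rho + 2 * R" using w_le[of k] mm_nonneg[of k] R0 by simp
  finally show ?thesis .
qed

lemma PB2:
  assumes t: "0 \<le> \<tau>" "\<tau> \<le> UL k"
  shows "d (pos k \<tau>) (Y (Suc (Suc k))) \<le> (UL k - \<tau>) + rho + 2 * R"
proof (cases "\<tau> \<le> mm k")
  case True
  have inX: "ch k \<tau> \<in> X" "bb k \<in> X" "Y (Suc (Suc k)) \<in> X" using ch_props(3) t True bb_in Y_in by auto
  have "d (ch k \<tau>) (Y (Suc (Suc k))) \<le> d (ch k \<tau>) (ch k (mm k)) + d (bb k) (Y (Suc (Suc k)))"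
    using triangle[OF inX] ch_props(2) by simp
  also have "\<dots> \<le> (mm k - \<tau> + R) + (midl k + rho + R)"
  proof (intro add_mono)
    show "d (ch k \<tau>) (ch k (mm k)) \<le> mm k - \<tau> + R" using ch_props(4)[of \<tau> k "mm k"] t True by simp
    have "d (bb k) (Y (Suc (Suc k))) = d (gam (Suc k) (ct k)) (gam (Suc k) (ell (Suc k)))"
      unfolding bb_def using gam_props(2) by simp
    also have "\<dots> \<le> ell (Suc k) - ct k + R"
      using gam_props(4)[of "ct k" "Suc k" "ell (Suc k)"] cs_ct_range[of k] by simp
    also have "\<dots> \<le> midl k + rho + R" using u_le[of "Suc k"] unfolding midl_def by simp
    finally show "d (bb k) (Y (Suc (Suc k))) \<le> midl k + rho + R" .
  qed
  finally show ?thesis unfolding pos_def UL_def using True by simp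
next
  case False
  have "d (pos k \<tau>) (Y (Suc (Suc k))) = d (gam (Suc k) (ct k + (\<tau> - mm k))) (gam (Suc k) (ell (Suc k)))"
    using pos_mid[of k \<tau>] False gam_props(2) by simp
  also have "\<dots> \<le> ell (Suc k) - (ct k + (\<tau> - mm k)) + R"
    using gam_props(4)[of "ct k + (\<tau> - mm k)" "Suc k" "ell (Suc k)"] mid_range[of k \<tau>] False t ell_nonneg by simp
  also have "\<dots> \<le> (UL k - \<tau>) + rho + 2 * R" using u_le[of "Suc k"] R0 unfolding UL_def midl_def by simp
  finally show ?thesis .
qed

lemma WU_up:
  assumes t: "0 \<le> \<tau>" "\<tau> \<le> \<tau>'" "\<tau>' \<le> UL k"
  shows "d (pos k \<tau>) (pos k \<tau>') \<le> \<tau>' - \<tau> + 2 * R"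
proof (cases "\<tau>' \<le> mm k")
  case True
  thus ?thesis unfolding pos_def using ch_props(4)[of \<tau> k \<tau>'] t R0 by auto
next
  case F': False
  show ?thesis
  proof (cases "\<tau> \<le> mm k")
    case True
    have inX: "ch k \<tau> \<in> X" "bb k \<in> X" "pos k \<tau>' \<in> X" using ch_props(3) t True bb_in pos_in by auto
    have "d (ch k \<tau>) (pos k \<tau>') \<le> d (ch k \<tau>) (ch k (mm k)) + d (bb k) (pos k \<tau>')"
      using triangle[OF inX] ch_props(2) by simp
    also have "\<dots> \<le> (mm k - \<tau> + R) + (\<tau>' - mm k + R)"
    proof (intro add_mono)
      show "d (ch k \<tau>) (ch k (mm k)) \<le> mm k - \<tau> + R" using ch_props(4)[of \<tau> k "mm k"] t True by simp
      have "d (bb k) (pos k \<tau>') = d (gam (Suc k) (ct k)) (gam (Suc k) (ct k + (\<tau>' - mm k)))"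
        unfolding bb_def using pos_mid[of k \<tau>'] F' by simp
      also have "\<dots> \<le> \<tau>' - mm k + R"
        using gam_props(4)[of "ct k" "Suc k" "ct k + (\<tau>' - mm k)"] mid_range[of k \<tau>'] F' t cs_ct_range[of k] by simp
      finally show "d (bb k) (pos k \<tau>') \<le> \<tau>' - mm k + R" .
    qed
    finally show ?thesis unfolding pos_def using True by simp
  next
    case False
    have "d (pos k \<tau>) (pos k \<tau>') = d (gam (Suc k) (ct k + (\<tau> - mm k))) (gam (Suc k) (ct k + (\<tau>' - mm k)))"
      using pos_mid F' False by simp
    also have "\<dots> \<le> \<tau>' - \<tau> + R"
      using gam_props(4)[of "ct k + (\<tau> - mm k)" "Suc k" "ct k + (\<tau>' - mm k)"] mid_range[of k \<tau>] mid_range[of k \<tau>'] F' False t by simp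
    finally show ?thesis using R0 by simp
  qed
qed

lemma easy_lo: "x \<ge> 0 \<Longrightarrow> x - R \<ge> x / L0 - 4 * R"
proof -
  assume "x \<ge> 0"
  hence "x / L0 \<le> x" using L0 by (simp add: divide_le_eq mult_le_cancel_left1)
  thus ?thesis using R0 by simp
qed

lemma WU_lo:
  assumes t: "0 \<le> \<tau>" "\<tau> \<le> \<tau>'" "\<tau>' \<le> UL k"
  shows "d (pos k \<tau>) (pos k \<tau>') \<ge> (\<tau>' - \<tau>) / L0 - 4 * R"
proof (cases "\<tau>' \<le> mm k")
  case True
  have "d (pos k \<tau>) (pos k \<tau>') \<ge> \<tau>' - \<tau> - R"
    unfolding pos_def using ch_props(5)[of \<tau> k \<tau>'] t True by auto
  thus ?thesis using easy_lo[of "\<tau>' - \<tau>"] t by simp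
next
  case F': False
  show ?thesis
  proof (cases "\<tau> \<le> mm k")
    case True
    have "d (ch k \<tau>) (gam (Suc k) (ct k + (\<tau>' - mm k))) \<ge> ((mm k - \<tau>) + ((ct k + (\<tau>' - mm k)) - ct k)) / L0 - 4 * R"
      using C2[of \<tau> k "ct k + (\<tau>' - mm k)"] t True mid_range[of k \<tau>'] F' by auto
    thus ?thesis unfolding pos_def using True F' by simp
  next
    case False
    have "d (pos k \<tau>) (pos k \<tau>') = d (gam (Suc k) (ct k + (\<tau> - mm k))) (gam (Suc k) (ct k + (\<tau>' - mm k)))"
      using pos_mid F' False by simp
    also have "\<dots> \<ge> \<tau>' - \<tau> - R"
      using gam_props(5)[of "ct k + (\<tau> - mm k)" "Suc k" "ct k + (\<tau>' - mm k)"] mid_range[of k \<tau>] mid_range[of k \<tau>'] F' False t by simp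
    finally show ?thesis using easy_lo[of "\<tau>' - \<tau>"] t by simp
  qed
qed

lemma CU_up:
  assumes t: "mm k \<le> \<tau>" "\<tau> \<le> UL k" and t': "0 \<le> \<tau>'" "\<tau>' \<le> UL (Suc k)"
  shows "d (pos k \<tau>) (pos (Suc k) \<tau>') \<le> (UL k - \<tau>) + \<tau>' + 2 * R"
proof -
  define r where "r = ct k + (\<tau> - mm k)"
  have px: "pos k \<tau> = gam (Suc k) r" unfolding r_def using pos_mid t by simp
  have rr: "0 \<le> r" "r \<le> cs (Suc k)" using mid_range[OF t] cs_ct_range[of k] unfolding r_def by auto
  have csr: "cs (Suc k) - r = UL k - \<tau>" unfolding r_def UL_def midl_def by simp
  have inX: "gam (Suc k) r \<in> X" "a (Suc k) \<in> X" "pos (Suc k) \<tau>' \<in> X"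
    using gam_props(3) rr cs_ct_range[of "Suc k"] a_in pos_in t' by auto
  have d1: "d (gam (Suc k) r) (a (Suc k)) \<le> UL k - \<tau> + R"
    using gam_props(4)[of r "Suc k" "cs (Suc k)"] rr cs_ct_range[of "Suc k"] csr unfolding a_def by simp
  have d2: "d (a (Suc k)) (pos (Suc k) \<tau>') \<le> \<tau>' + R"
  proof (cases "\<tau>' \<le> mm (Suc k)")
    case True
    thus ?thesis unfolding pos_def using ch_props(4)[of 0 "Suc k" \<tau>'] ch_props(1)[of "Suc k"] t' mm_nonneg by simp
  next
    case False
    have inX2: "a (Suc k) \<in> X" "bb (Suc k) \<in> X" "pos (Suc k) \<tau>' \<in> X" using a_in bb_in pos_in t' by auto
    have "d (a (Suc k)) (pos (Suc k) \<tau>') \<le> mm (Suc k) + d (bb (Suc k)) (pos (Suc k) \<tau>')"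
      using triangle[OF inX2] unfolding mm_def by simp
    also have "d (bb (Suc k)) (pos (Suc k) \<tau>') \<le> \<tau>' - mm (Suc k) + R"
      using gam_props(4)[of "ct (Suc k)" "Suc (Suc k)" "ct (Suc k) + (\<tau>' - mm (Suc k))"]
        mid_range[of "Suc k" \<tau>'] False t' cs_ct_range[of "Suc k"] pos_mid[of "Suc k" \<tau>']
      unfolding bb_def by simp
    finally show ?thesis by simp
  qed
  have "d (pos k \<tau>) (pos (Suc k) \<tau>') \<le> d (gam (Suc k) r) (a (Suc k)) + d (a (Suc k)) (pos (Suc k) \<tau>')"
    using triangle[OF inX] px by simp
  thus ?thesis using d1 d2 by simp
qed

lemma CU_lo:
  assumes t: "mm k \<le> \<tau>" "\<tau> \<le> UL k" and t': "0 \<le> \<tau>'" "\<tau>' \<le> UL (Suc k)"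
  shows "d (pos k \<tau>) (pos (Suc k) \<tau>') \<ge> ((UL k - \<tau>) + \<tau>') / L0 - 4 * R"
proof -
  define r where "r = ct k + (\<tau> - mm k)"
  have px: "pos k \<tau> = gam (Suc k) r" unfolding r_def using pos_mid t by simp
  have rr: "0 \<le> r" "r \<le> cs (Suc k)" using mid_range[OF t] cs_ct_range[of k] unfolding r_def by auto
  have csr: "cs (Suc k) - r = UL k - \<tau>" unfolding r_def UL_def midl_def by simp
  show ?thesis
  proof (cases "\<tau>' \<le> mm (Suc k)")
    case True
    have "d (gam (Suc k) r) (ch (Suc k) \<tau>') \<ge> ((cs (Suc k) - r) + \<tau>') / L0 - 4 * R"
      using C1[of r "Suc k" \<tau>'] rr t' True by simp
    thus ?thesis using px csr True unfolding pos_def by simp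
  next
    case False
    define r' where "r' = ct (Suc k) + (\<tau>' - mm (Suc k))"
    have p': "pos (Suc k) \<tau>' = gam (Suc (Suc k)) r'" unfolding r'_def using pos_mid False by simp
    have rr': "ct (Suc k) \<le> r'" "r' \<le> ell (Suc (Suc k))" using mid_range[of "Suc k" \<tau>'] False t' unfolding r'_def by auto
    have "d (gam (Suc k) r) (gam (Suc (Suc k)) r') \<ge> ((cs (Suc k) - r) + mm (Suc k) + (r' - ct (Suc k))) / L0 - 4 * R"
      using C3[of r "Suc k" r'] rr rr' by simp
    moreover have "(cs (Suc k) - r) + mm (Suc k) + (r' - ct (Suc k)) = (UL k - \<tau>) + \<tau>'"
      using csr unfolding r'_def by simp
    ultimately show ?thesis using px p' by simp
  qed
qed

end

lemma cycd_fwd: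
  assumes "a \<le> b" "b - a < n"
  shows "cycd n a b = min (real (b - a)) (real n - real (b - a))"
proof -
  obtain q where q: "b = a + q" "q < n" using assms by (metis le_add_diff_inverse)
  have n0: "n > 0" using q by simp
  consider "a mod n + q < n" | "a mod n + q \<ge> n" by linarith
  thus ?thesis
  proof cases
    case 1
    have "b mod n = a mod n + q"
      using 1 q by (metis mod_add_left_eq mod_less)
    thus ?thesis unfolding cycd_def using q by (simp add: min_def)
  next
    case 2
    have am: "a mod n < n" using n0 by simp
    have lt: "a mod n + q - n < n" using am q by linarith
    have "(a mod n + q) mod n = (a mod n + q - n) mod n" using 2 by (rule le_mod_geq)
    also have "\<dots> = a mod n + q - n" using lt by simp
    finally have "b mod n = a mod n + q - n" using q by (metis mod_add_left_eq)
    hence rb: "real (b mod n) = real (a mod n) + real q - real n" using 2 by (simp add: of_nat_diff)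
    have "\<bar>real (a mod n) - real (b mod n)\<bar> = real n - real q" using rb q by simp
    moreover have "real (b - a) = real q" using q by simp
    ultimately show ?thesis unfolding cycd_def by (simp add: min.commute)
  qed
qed

context polyP begin
lemma Y_per: "Y (k + n) = Y k" unfolding Y_def by simp
lemma gam_per: "gam (k + n) = gam k"
  unfolding gam_def using Y_per[of k] Y_per[of "Suc k"] by simp
lemma ell_per: "ell (k + n) = ell k"
  unfolding ell_def using Y_per[of k] Y_per[of "Suc k"] by simp
end

context polyQ begin
lemma Psi_per: "Psi (k + n) = Psi k"
  unfolding Psi_def[abs_def] using gam_per[of k] gam_per[of "Suc k"] ell_per[of k] by simp
lemma box_per: "box (k + n) = box k"
  unfolding box_def using ell_per[of k] ell_per[of "Suc k"] by simp
lemma cut_per: "cut (k + n) = cut k"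
  unfolding cut_def goodcut_def[abs_def] using Psi_per[of k] box_per[of k] by simp
lemma cs_per: "cs (k + n) = cs k" unfolding cs_def using cut_per by simp
lemma ct_per: "ct (k + n) = ct k" unfolding ct_def using cut_per by simp
lemma a_per: "a (k + n) = a k" unfolding a_def using cs_per gam_per by simp
lemma bb_per: "bb (k + n) = bb k" unfolding bb_def using ct_per gam_per[of "Suc k"] by simp
lemma mm_per: "mm (k + n) = mm k" unfolding mm_def using a_per bb_per by simp
lemma ch_per: "ch (k + n) = ch k" unfolding ch_def using a_per bb_per by simp
end

locale polyQ3 = polyQ2 +
  fixes Lt th :: real
  assumes n6: "n \<ge> 6" and th0: "th > 0"
  and A1: "(lam / K - 2 * rho) / lam \<ge> L0 / Lt"
  and A2: "(K * lam + rho + 3 * R) / lam \<le> Lt"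
  and A3: "(K * lam + rho + 3 * R) / lam * th \<le> lam / K - 2 * rho"
  and A4: "th * (1 / K - 1 / Lt) \<ge> 2 * lam * ((K * lam + rho + 3 * R) / lam - 1 / K) + 2 * (rho + 2 * R)"
  and A5: "(Lt - (K * lam + rho + 3 * R) / lam) * th \<ge> 2 * (rho + 2 * R)"
  and A6: "lam * (real n / 2 - 2) / K - 2 * lam * ((K * lam + rho + 3 * R) / lam) - 2 * (rho + 2 * R) \<ge> real n * lam / (2 * Lt)"
begin

definition sh :: real where "sh = (K * lam + rho + 3 * R) / lam"
definition sl :: real where "sl = (lam / K - 2 * rho) / lam"
definition sig :: "nat \<Rightarrow> real" where "sig k = UL k / lam"
definition uq :: "real \<Rightarrow> nat" where "uq x = nat \<lfloor>x / lam\<rfloor>"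
definition Fm :: "real \<Rightarrow> 'a" where "Fm x = pos (uq x) (sig (uq x) * (x - real (uq x) * lam))"

lemma midl_per: "midl (k + n) = midl k" unfolding midl_def using cs_per[of "Suc k"] ct_per by simp
lemma UL_per: "UL (k + n) = UL k" unfolding UL_def using mm_per midl_per by simp
lemma pos_per: "pos (k + n) = pos k"
proof -
  have g: "gam (Suc (k + n)) = gam (Suc k)" using gam_per[of "Suc k"] by simp
  show ?thesis unfolding pos_def[abs_def] by (simp only: g mm_per[of k] ch_per[of k] ct_per[of k])
qed
lemma sig_per: "sig (k + n) = sig k" unfolding sig_def using UL_per by simp

lemma sig_bounds: "sl \<le> sig k" "sig k \<le> sh" "sig k > 0"
  using UL_lower[of k] UL_upper[of k] UL_pos[of k] lam0 unfolding sl_def sh_def sig_def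
  by (auto simp: divide_right_mono)

lemma sh_ge: "sh \<ge> K"
proof -
  have "K * lam \<le> K * lam + rho + 3 * R" using rho_nonneg R0 by simp
  thus ?thesis unfolding sh_def using lam0 by (simp add: le_divide_eq)
qed

lemma uq_props:
  assumes "x \<ge> 0"
  shows "0 \<le> x - real (uq x) * lam" "x - real (uq x) * lam < lam"
proof -
  have fl: "real_of_int \<lfloor>x / lam\<rfloor> \<le> x / lam" "x / lam < real_of_int \<lfloor>x / lam\<rfloor> + 1" by linarith+
  have nn: "\<lfloor>x / lam\<rfloor> \<ge> 0" using assms lam0 by simp
  have u: "real (uq x) = real_of_int \<lfloor>x / lam\<rfloor>" unfolding uq_def using nn by simp
  have "real_of_int \<lfloor>x / lam\<rfloor> * lam \<le> x / lam * lam" using fl(1) lam0 by (intro mult_right_mono) auto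
  thus "0 \<le> x - real (uq x) * lam" using u lam0 by simp
  have "x / lam * lam < (real_of_int \<lfloor>x / lam\<rfloor> + 1) * lam" using fl(2) lam0 by (intro mult_strict_right_mono) auto
  thus "x - real (uq x) * lam < lam" using u lam0 by (simp add: algebra_simps)
qed

lemma uq_eq:
  assumes "0 \<le> P" "P < lam"
  shows "uq (real k * lam + P) = k"
proof -
  have "(real k * lam + P) / lam = real k + P / lam" using lam0 by (simp add: field_simps)
  moreover have "0 \<le> P / lam" "P / lam < 1" using assms lam0 by auto
  ultimately have "\<lfloor>(real k * lam + P) / lam\<rfloor> = int k" by (simp add: floor_unique)
  thus ?thesis unfolding uq_def by simp
qed

lemma tau_range:
  assumes "0 \<le> P" "P < lam"
  shows "0 \<le> sig k * P" "sig k * P \<le> UL k" "UL k - sig k * P = sig k * (lam - P)"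
proof -
  show "0 \<le> sig k * P" using sig_bounds(3)[of k] assms by simp
  have "sig k * P \<le> sig k * lam" using sig_bounds(3)[of k] assms by (intro mult_left_mono) auto
  thus "sig k * P \<le> UL k" using lam0 unfolding sig_def by simp
  have "sig k * lam = UL k" using lam0 unfolding sig_def by simp
  thus "UL k - sig k * P = sig k * (lam - P)" by (simp add: right_diff_distrib)
qed

lemma Fm_eq:
  assumes "0 \<le> P" "P < lam"
  shows "Fm (real k * lam + P) = pos k (sig k * P)"
  unfolding Fm_def uq_eq[OF assms] by simp

lemma Fm_in: assumes "x \<ge> 0" shows "Fm x \<in> X"
proof -
  note u = uq_props[OF assms]
  show ?thesis unfolding Fm_def by (rule pos_in[OF tau_range(1)[OF u] tau_range(2)[OF u]])
qed

lemma Fm_per: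
  assumes "x \<ge> 0" shows "Fm (x + real n * lam) = Fm x"
proof -
  define k where "k = uq x"
  define P where "P = x - real k * lam"
  have P: "0 \<le> P" "P < lam" using uq_props[OF assms] unfolding P_def k_def by auto
  have eq: "x + real n * lam = real (k + n) * lam + P" unfolding P_def by (simp add: algebra_simps)
  have "Fm (real (k + n) * lam + P) = pos (k + n) (sig (k + n) * P)" by (rule Fm_eq[OF P])
  hence "Fm (x + real n * lam) = pos (k + n) (sig (k + n) * P)" by (simp only: eq)
  also have "\<dots> = pos k (sig k * P)" using pos_per sig_per by simp
  also have "\<dots> = Fm x" using Fm_eq[OF P, of k] unfolding P_def by simp
  finally show ?thesis .
qed

end

context polyQ3 begin

lemma basics: "sh \<ge> 1" "K \<le> Lt" "sh \<le> Lt" "sl * (1 / L0) \<ge> 1 / Lt" "1 / K \<le> sh" "1 / K \<le> 1"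
    "th \<le> lam" "rho \<ge> 0" "Lt > 0"
proof -
  show s1: "sh \<ge> 1" using sh_ge K1 by simp
  show s2: "sh \<le> Lt" using A2 unfolding sh_def .
  show "K \<le> Lt" using sh_ge s2 by simp
  show Lt0: "Lt > 0" using s1 s2 by simp
  show "sl * (1 / L0) \<ge> 1 / Lt"
  proof -
    have "sl \<ge> L0 / Lt" using A1 unfolding sl_def .
    hence "sl * (1 / L0) \<ge> L0 / Lt * (1 / L0)" using L0 by (intro mult_right_mono) auto
    thus ?thesis using L0 by simp
  qed
  show k1: "1 / K \<le> 1" using K1 by simp
  thus "1 / K \<le> sh" using s1 by simp
  show "rho \<ge> 0" by (rule rho_nonneg)
  have "sh * th \<le> lam / K - 2 * rho" using A3 unfolding sh_def .
  moreover have "lam / K \<le> lam" using K1 lam0 by (simp add: divide_le_eq)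
  moreover have "th \<le> sh * th" using s1 th0 by (simp add: mult_le_cancel_right1)
  ultimately show "th \<le> lam" using rho_nonneg by linarith
qed

lemma anchors:
  assumes x: "x \<ge> 0"
  defines "k \<equiv> uq x" and "P \<equiv> x - real (uq x) * lam"
  shows "d (Fm x) (Y (Suc k)) \<le> sh * P + rho + 2 * R"
    and "d (Fm x) (Y (Suc (Suc k))) \<le> sh * (lam - P) + rho + 2 * R"
proof -
  have P: "0 \<le> P" "P < lam" using uq_props[OF x] unfolding P_def by auto
  have F: "Fm x = pos k (sig k * P)" unfolding Fm_def k_def P_def by simp
  note tr = tau_range[OF P, of k]
  have "d (Fm x) (Y (Suc k)) \<le> sig k * P + rho + 2 * R" using PB1[OF tr(1) tr(2)] F by simp
  moreover have "sig k * P \<le> sh * P" using sig_bounds(2)[of k] P by (intro mult_right_mono) auto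
  ultimately show "d (Fm x) (Y (Suc k)) \<le> sh * P + rho + 2 * R" by simp
  have "d (Fm x) (Y (Suc (Suc k))) \<le> sig k * (lam - P) + rho + 2 * R" using PB2[OF tr(1) tr(2)] F tr(3) by simp
  moreover have "sig k * (lam - P) \<le> sh * (lam - P)" using sig_bounds(2)[of k] P by (intro mult_right_mono) auto
  ultimately show "d (Fm x) (Y (Suc (Suc k))) \<le> sh * (lam - P) + rho + 2 * R" by simp
qed

lemma pair_same:
  assumes x: "x \<ge> 0" and z: "z \<ge> 0" and j: "uq (x + z) = uq x"
  shows "z / Lt - 4 * R \<le> d (Fm x) (Fm (x + z)) \<and> d (Fm x) (Fm (x + z)) \<le> Lt * z + 4 * R"
proof -
  define k where "k = uq x"
  define P where "P = x - real k * lam"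
  define P' where "P' = x + z - real k * lam"
  have P: "0 \<le> P" "P < lam" using uq_props[OF x] unfolding P_def k_def by auto
  have P': "0 \<le> P'" "P' < lam" using uq_props[of "x + z"] x z j unfolding P'_def k_def by auto
  have F: "Fm x = pos k (sig k * P)" unfolding Fm_def k_def P_def by simp
  have F': "Fm (x + z) = pos k (sig k * P')" unfolding Fm_def k_def P'_def using j by simp
  have zz: "P' = P + z" unfolding P_def P'_def by simp
  have sg: "sig k * P' - sig k * P = sig k * z" using zz by (simp add: algebra_simps)
  have le: "sig k * P \<le> sig k * P'" using zz sig_bounds(3)[of k] z by (intro mult_left_mono) auto
  note tr = tau_range[OF P', of k]
  have lo: "d (Fm x) (Fm (x + z)) \<ge> (sig k * z) / L0 - 4 * R"
    using WU_lo[OF tau_range(1)[OF P] le tr(2)] F F' sg by simp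
  have up: "d (Fm x) (Fm (x + z)) \<le> sig k * z + 2 * R"
    using WU_up[OF tau_range(1)[OF P] le tr(2)] F F' sg by simp
  have "(sig k * z) / L0 \<ge> z / Lt"
  proof -
    have "sig k * z * (1 / L0) \<ge> sl * z * (1 / L0)"
      using sig_bounds(1)[of k] z L0 by (intro mult_right_mono) auto
    moreover have "sl * z * (1 / L0) = (sl * (1 / L0)) * z" by simp
    moreover have "(sl * (1 / L0)) * z \<ge> (1 / Lt) * z" using basics(4) z by (intro mult_right_mono) auto
    ultimately show ?thesis by simp
  qed
  moreover have "sig k * z \<le> Lt * z"
    using sig_bounds(2)[of k] basics(3) z by (intro mult_right_mono) auto
  ultimately show ?thesis using lo up R0 by linarith
qed

end

context polyQ3 begin

lemma uq_mono:
  assumes x: "x \<ge> 0" and z: "z \<ge> 0"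
  shows "uq x \<le> uq (x + z)"
  unfolding uq_def using x z lam0 by (intro nat_mono floor_mono divide_right_mono) auto

lemma pair_adj:
  assumes x: "x \<ge> 0" and z: "z \<ge> 0" and zt: "z < th" and j: "uq (x + z) \<noteq> uq x"
  shows "z / Lt - 4 * R \<le> d (Fm x) (Fm (x + z)) \<and> d (Fm x) (Fm (x + z)) \<le> Lt * z + 4 * R"
proof -
  define k where "k = uq x"
  define j where "j = uq (x + z)"
  define P where "P = x - real k * lam"
  define P' where "P' = x + z - real j * lam"
  have P: "0 \<le> P" "P < lam" using uq_props[OF x] unfolding P_def k_def by auto
  have P': "0 \<le> P'" "P' < lam" using uq_props[of "x + z"] x z unfolding P'_def j_def by auto
  have kj: "k < j" using uq_mono[OF x z] j unfolding k_def j_def by simp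
  have "real j * lam \<le> x + z" using P' unfolding P'_def by simp
  also have "\<dots> < real k * lam + lam + lam" using P zt basics(7) unfolding P_def by simp
  finally have "real j * lam < (real k + 2) * lam" by (simp add: algebra_simps)
  hence "real j < real k + 2" using lam0 by simp
  hence j1: "j = Suc k" using kj by simp
  have zsum: "z = (lam - P) + P'" using j1 unfolding P_def P'_def by (simp add: algebra_simps)
  have F: "Fm x = pos k (sig k * P)" unfolding Fm_def k_def P_def by simp
  have F': "Fm (x + z) = pos (Suc k) (sig (Suc k) * P')" unfolding Fm_def j_def[symmetric] P'_def j1 by simp
  note tr = tau_range[OF P, of k] and tr' = tau_range[OF P', of "Suc k"]
  have lp: "lam - P \<le> z" using zsum P' by simp
  have "UL k - sig k * P \<le> midl k"
  proof -
    have "UL k - sig k * P = sig k * (lam - P)" using tr(3) .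
    also have "\<dots> \<le> sh * th"
      using sig_bounds(2)[of k] sig_bounds(3)[of k] lp zt P basics(1)
      by (intro mult_mono) auto
    also have "\<dots> \<le> lam / K - 2 * rho" using A3 unfolding sh_def .
    also have "\<dots> \<le> midl k" using midl_lower .
    finally show ?thesis .
  qed
  hence mmt: "mm k \<le> sig k * P" unfolding UL_def by simp
  define path where "path = sig k * (lam - P) + sig (Suc k) * P'"
  have pth: "(UL k - sig k * P) + sig (Suc k) * P' = path" unfolding path_def using tr(3) by simp
  have lo: "d (Fm x) (Fm (x + z)) \<ge> path / L0 - 4 * R"
    using CU_lo[OF mmt tr(2) tr'(1) tr'(2)] F F' pth by simp
  have up: "d (Fm x) (Fm (x + z)) \<le> path + 2 * R"
    using CU_up[OF mmt tr(2) tr'(1) tr'(2)] F F' pth by simp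
  have pl: "path \<ge> sl * z"
  proof -
    have "sig k * (lam - P) \<ge> sl * (lam - P)" using sig_bounds(1)[of k] P by (intro mult_right_mono) auto
    moreover have "sig (Suc k) * P' \<ge> sl * P'" using sig_bounds(1)[of "Suc k"] P' by (intro mult_right_mono) auto
    ultimately show ?thesis unfolding path_def zsum by (simp add: algebra_simps)
  qed
  have pu: "path \<le> sh * z"
  proof -
    have "sig k * (lam - P) \<le> sh * (lam - P)" using sig_bounds(2)[of k] P by (intro mult_right_mono) auto
    moreover have "sig (Suc k) * P' \<le> sh * P'" using sig_bounds(2)[of "Suc k"] P' by (intro mult_right_mono) auto
    ultimately show ?thesis unfolding path_def zsum by (simp add: algebra_simps)
  qed
  have "path / L0 \<ge> z / Lt"
  proof -
    have "path * (1 / L0) \<ge> (sl * z) * (1 / L0)" using pl L0 by (intro mult_right_mono) auto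
    moreover have "(sl * z) * (1 / L0) = (sl * (1 / L0)) * z" by simp
    moreover have "(sl * (1 / L0)) * z \<ge> (1 / Lt) * z" using basics(4) z by (intro mult_right_mono) auto
    ultimately show ?thesis by simp
  qed
  moreover have "sh * z \<le> Lt * z" using basics(3) z by (intro mult_right_mono) auto
  ultimately show ?thesis using lo up pu R0 by linarith
qed

end

context polyQ3 begin

lemma pair_far:
  assumes x: "x \<ge> 0" and z: "z \<ge> th" and zn: "z \<le> real n * lam / 2" and j: "uq (x + z) \<noteq> uq x"
  shows "z / Lt - 4 * R \<le> d (Fm x) (Fm (x + z)) \<and> d (Fm x) (Fm (x + z)) \<le> Lt * z + 4 * R"
proof -
  have z0: "z \<ge> 0" using z th0 by simp
  define k where "k = uq x"
  define j where "j = uq (x + z)"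
  define P where "P = x - real k * lam"
  define P' where "P' = x + z - real j * lam"
  have P: "0 \<le> P" "P < lam" using uq_props[OF x] unfolding P_def k_def by auto
  have P': "0 \<le> P'" "P' < lam" using uq_props[of "x + z"] x z0 unfolding P'_def j_def by auto
  have kj: "k < j" using uq_mono[OF x z0] j unfolding k_def j_def by simp
  have x'0: "x + z \<ge> 0" using x z0 by simp
  have inX: "Fm x \<in> X" "Fm (x + z) \<in> X" using Fm_in x x'0 by auto
  have an: "d (Fm x) (Y (Suc k)) \<le> sh * P + rho + 2 * R"
     "d (Fm x) (Y (Suc (Suc k))) \<le> sh * (lam - P) + rho + 2 * R"
    using anchors[OF x] unfolding k_def P_def by auto
  have an': "d (Fm (x + z)) (Y (Suc j)) \<le> sh * P' + rho + 2 * R"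
     "d (Fm (x + z)) (Y (Suc (Suc j))) \<le> sh * (lam - P') + rho + 2 * R"
    using anchors[OF x'0] unfolding j_def P'_def by auto
  have zeq: "z = (real j - real k) * lam + P' - P" unfolding P_def P'_def by (simp add: algebra_simps)
  define rr where "rr = rho + 2 * R"
  have up: "d (Fm x) (Fm (x + z)) \<le> Lt * z + 4 * R"
  proof -
    define q where "q = j - k - 1"
    have qj: "Suc (Suc k) + q = Suc j" unfolding q_def using kj by simp
    have "d (Fm x) (Fm (x + z)) \<le> d (Fm x) (Y (Suc (Suc k))) + d (Y (Suc (Suc k))) (Fm (x + z))"
      using triangle[OF inX(1) Y_in inX(2)] .
    also have "d (Y (Suc (Suc k))) (Fm (x + z)) \<le> d (Y (Suc (Suc k))) (Y (Suc j)) + d (Y (Suc j)) (Fm (x + z))"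
      using triangle[OF Y_in Y_in inX(2)] .
    also have "d (Y (Suc (Suc k))) (Y (Suc j)) \<le> real q * (K * lam)"
      using Y_chain[of "Suc (Suc k)" q] qj unfolding D_def by simp
    finally have "d (Fm x) (Fm (x + z)) \<le> (sh * (lam - P) + rr) + real q * (K * lam) + (sh * P' + rr)"
      using an(2) an'(1) commute unfolding rr_def by simp
    moreover have "real q * (K * lam) \<le> real q * (sh * lam)"
      using sh_ge lam0 by (intro mult_left_mono) auto
    moreover have "sh * z = sh * (lam - P) + real q * (sh * lam) + sh * P'"
    proof -
      have "z = (lam - P) + real q * lam + P'"
        using zeq kj unfolding q_def by (simp add: of_nat_diff algebra_simps)
      hence "sh * z = sh * ((lam - P) + real q * lam + P')" by (rule arg_cong[where f="\<lambda>t. sh * t"])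
      thus ?thesis by (simp add: algebra_simps)
    qed
    ultimately have "d (Fm x) (Fm (x + z)) \<le> sh * z + 2 * rr" by linarith
    moreover have "(Lt - sh) * z \<ge> (Lt - sh) * th"
      using z basics(3) by (intro mult_left_mono) auto
    moreover have "(Lt - sh) * th \<ge> 2 * rr" using A5 unfolding sh_def rr_def .
    moreover have "(Lt - sh) * th = Lt * th - sh * th" "(Lt - sh) * z = Lt * z - sh * z"
      by (simp_all add: algebra_simps)
    ultimately show ?thesis using R0 by linarith
  qed
  have lo: "d (Fm x) (Fm (x + z)) \<ge> z / Lt"
  proof -
    define q where "q = Suc (Suc j) - Suc k"
    have q: "real q = real j + 1 - real k" unfolding q_def using kj by (simp add: of_nat_diff)
    define e where "e = P + (lam - P')"
    have e: "0 \<le> e" "e \<le> 2 * lam" unfolding e_def using P P' by auto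
    have qz: "real q * lam = z + e"
    proof -
      have "real q * lam = (real j + 1 - real k) * lam" using q by simp
      also have "\<dots> = (real j - real k) * lam + P' - P + (P + (lam - P'))" by (simp add: algebra_simps)
      finally show ?thesis unfolding e_def zeq .
    qed
    have qn: "real q \<le> real n / 2 + 2"
    proof -
      have "real q * lam \<le> (real n / 2 + 2) * lam" using qz zn e by (simp add: algebra_simps)
      thus ?thesis using lam0 by simp
    qed
    have qlt: "q < n" using qn n6 by linarith
    have cyc: "cycd n (Suc k) (Suc (Suc j)) = min (real q) (real n - real q)"
      using cycd_fwd[of "Suc k" "Suc (Suc j)" n] kj qlt unfolding q_def by simp
    have Yb: "d (Y (Suc k)) (Y (Suc (Suc j))) \<ge> lam * cycd n (Suc k) (Suc (Suc j)) / K"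
      using Y_bounds by blast
    have "d (Y (Suc k)) (Y (Suc (Suc j))) \<le> d (Y (Suc k)) (Fm x) + d (Fm x) (Y (Suc (Suc j)))"
      using triangle[OF Y_in inX(1) Y_in] .
    also have "d (Fm x) (Y (Suc (Suc j))) \<le> d (Fm x) (Fm (x + z)) + d (Fm (x + z)) (Y (Suc (Suc j)))"
      using triangle[OF inX(1) inX(2) Y_in] .
    finally have tri: "d (Fm x) (Fm (x + z)) \<ge> lam * cycd n (Suc k) (Suc (Suc j)) / K - sh * e - 2 * rr"
      using an(1) an'(2) commute Yb unfolding rr_def e_def by (simp add: algebra_simps)
    show ?thesis
    proof (cases "real q \<le> real n - real q")
      case True
      hence "cycd n (Suc k) (Suc (Suc j)) = real q" using cyc by simp
      hence "lam * cycd n (Suc k) (Suc (Suc j)) / K = (z + e) / K" using qz by (simp add: mult.commute)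
      hence d1: "d (Fm x) (Fm (x + z)) \<ge> z / K - (sh - 1 / K) * e - 2 * rr"
        using tri by (simp add: algebra_simps add_divide_distrib)
      have "(sh - 1 / K) * e \<le> (sh - 1 / K) * (2 * lam)" using e basics(5) by (intro mult_left_mono) auto
      moreover have "z * (1 / K - 1 / Lt) \<ge> th * (1 / K - 1 / Lt)"
      proof -
        have "1 / Lt \<le> 1 / K" using basics(2) K1 by (simp add: frac_le)
        thus ?thesis using z by (intro mult_right_mono) auto
      qed
      moreover have "th * (1 / K - 1 / Lt) \<ge> 2 * lam * (sh - 1 / K) + 2 * rr" using A4 unfolding sh_def rr_def .
      ultimately have "z / K - (sh - 1 / K) * e - 2 * rr \<ge> z / Lt" by (simp add: algebra_simps)
      thus ?thesis using d1 by simp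
    next
      case False
      hence "cycd n (Suc k) (Suc (Suc j)) = real n - real q" using cyc by simp
      moreover have "real n - real q \<ge> real n / 2 - 2" using qn by simp
      ultimately have "lam * cycd n (Suc k) (Suc (Suc j)) / K \<ge> lam * (real n / 2 - 2) / K"
        using lam0 K1 by (simp add: divide_right_mono)
      moreover have "sh * e \<le> sh * (2 * lam)" using e basics(1) by (intro mult_left_mono) auto
      moreover have "sh * (2 * lam) = 2 * lam * sh" by simp
      ultimately have "d (Fm x) (Fm (x + z)) \<ge> lam * (real n / 2 - 2) / K - 2 * lam * sh - 2 * rr"
        using tri by linarith
      moreover have "lam * (real n / 2 - 2) / K - 2 * lam * sh - 2 * rr \<ge> real n * lam / (2 * Lt)"
        using A6 unfolding sh_def rr_def .
      moreover have "real n * lam / (2 * Lt) \<ge> z / Lt"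
      proof -
        have "z / Lt \<le> (real n * lam / 2) / Lt" using divide_right_mono[OF zn, of Lt] basics(9) by linarith
        thus ?thesis by simp
      qed
      ultimately show ?thesis by linarith
    qed
  qed
  show ?thesis using up lo R0 by simp
qed

end

context polyQ3 begin

lemma pair:
  assumes x: "x \<ge> 0" and z: "z \<ge> 0" and zn: "z \<le> real n * lam / 2"
  shows "z / Lt - 4 * R \<le> d (Fm x) (Fm (x + z)) \<and> d (Fm x) (Fm (x + z)) \<le> Lt * z + 4 * R"
proof (cases "uq (x + z) = uq x")
  case True thus ?thesis using pair_same[OF x z] by simp
next
  case False
  show ?thesis
  proof (cases "z < th")
    case True thus ?thesis using pair_adj[OF x z True False] by simp
  next
    case F2: False thus ?thesis using pair_far[OF x _ zn False] by simp
  qed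
qed

lemma pair_ord:
  assumes p: "0 \<le> p" and pq: "p \<le> q" and q: "q < real n * lam"
  shows "circle_dist (real n * lam) p q / Lt - 4 * R \<le> d (Fm p) (Fm q) \<and>
         d (Fm p) (Fm q) \<le> Lt * circle_dist (real n * lam) p q + 4 * R"
proof -
  define c where "c = real n * lam"
  show ?thesis
  proof (cases "q - p \<le> c / 2")
    case True
    have cd: "circle_dist c p q = q - p" unfolding circle_dist_def using True pq by (simp add: min_def)
    have "q - p \<le> real n * lam / 2" using True unfolding c_def .
    from pair[OF p _ this] pq have "(q - p) / Lt - 4 * R \<le> d (Fm p) (Fm (p + (q - p))) \<and>
        d (Fm p) (Fm (p + (q - p))) \<le> Lt * (q - p) + 4 * R" by simp
    thus ?thesis using cd unfolding c_def by simp
  next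
    case False
    have cd: "circle_dist c p q = c - (q - p)" unfolding circle_dist_def using False pq by (simp add: min_def)
    have qq: "q \<ge> 0" using p pq by simp
    have "c - (q - p) \<ge> 0" "c - (q - p) \<le> c / 2" using False p q unfolding c_def[symmetric] by auto
    hence z: "c - (q - p) \<ge> 0" "c - (q - p) \<le> real n * lam / 2" unfolding c_def by auto
    from pair[OF qq z] have "(c - (q - p)) / Lt - 4 * R \<le> d (Fm q) (Fm (q + (c - (q - p)))) \<and>
        d (Fm q) (Fm (q + (c - (q - p)))) \<le> Lt * (c - (q - p)) + 4 * R" .
    moreover have "q + (c - (q - p)) = p + real n * lam" unfolding c_def by simp
    moreover have "Fm (p + real n * lam) = Fm p" using Fm_per[OF p] .
    ultimately show ?thesis using cd commute unfolding c_def by simp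
  qed
qed

theorem QI: "quasi_isometric_embedding (circle_pts (real n * lam)) (circle_dist (real n * lam)) X d Lt (4 * R) Fm"
  unfolding quasi_isometric_embedding_def
proof (rule conjI, goal_cases)
  case 1 show ?case using Fm_in by (auto simp: circle_pts_def)
next
  case 2 show ?case
  proof (intro ballI)
    fix p q assume p: "p \<in> circle_pts (real n * lam)" and q: "q \<in> circle_pts (real n * lam)"
    hence pq: "0 \<le> p" "p < real n * lam" "0 \<le> q" "q < real n * lam" by (auto simp: circle_pts_def)
    have sym: "circle_dist (real n * lam) p q = circle_dist (real n * lam) q p"
      unfolding circle_dist_def by (simp add: abs_minus_commute)
    show "1 / Lt * circle_dist (real n * lam) p q - 4 * R \<le> d (Fm p) (Fm q) \<and>
          d (Fm p) (Fm q) \<le> Lt * circle_dist (real n * lam) p q + 4 * R"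
    proof (cases "p \<le> q")
      case True thus ?thesis using pair_ord[OF pq(1) True pq(4)] by simp
    next
      case False thus ?thesis using pair_ord[OF pq(3) _ pq(2)] sym commute by simp
    qed
  qed
qed

end

lemma ev_pos:
  fixes g :: "real \<Rightarrow> real"
  assumes "(g \<longlongrightarrow> l) (at_right 0)" "l > 0"
  shows "eventually (\<lambda>x. g x > 0) (at_right 0)"
  using order_tendstoD(1)[OF assms(1) assms(2)] .

lemma choose_delta:
  fixes L L0 Q a b :: real
  assumes L: "L > 1" and L0: "L0 > 1"
  shows "\<exists>\<delta>. 0 < \<delta> \<and> \<delta> \<le> 1/2 \<and> 1 - \<delta>^2 - 22 * Q * \<delta>^2 > 0
     \<and> 1 - (1 + 22 * Q) * \<delta>^2 - 1 / L0 > 0 \<and> L - 1 - a * \<delta>^2 > 0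
     \<and> 1 - (1 + 22 * Q) * \<delta>^2 - (1 + a * \<delta>^2) * \<delta> > 0
     \<and> 1 - \<delta>^2 - 1 / L - 2 * (a + b + 1) * \<delta> > 0
     \<and> L - 1 - a * \<delta>^2 - 2 * b * \<delta> > 0 \<and> 1 - \<delta>^2 - 1 / L > 0"
proof -
  have t: "((\<lambda>x::real. x) \<longlongrightarrow> 0) (at_right 0)" by (rule tendsto_ident_at)
  have L0': "1 - 1 / L0 > 0" "1 - 1 / L > 0" "1 / L0 < 1" "1 / L < 1" using L L0 by auto
  have e1: "eventually (\<lambda>\<delta>. 1 - \<delta>^2 - 22 * Q * \<delta>^2 > 0) (at_right 0)"
    by (rule ev_pos[where l=1]) (auto intro!: tendsto_eq_intros t)
  have e2: "eventually (\<lambda>\<delta>. 1 - (1 + 22 * Q) * \<delta>^2 - 1 / L0 > 0) (at_right 0)"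
    by (rule ev_pos[where l="1 - 1 / L0"]) (auto intro!: tendsto_eq_intros t simp: L0')
  have e3: "eventually (\<lambda>\<delta>. L - 1 - a * \<delta>^2 > 0) (at_right 0)"
    by (rule ev_pos[where l="L - 1"]) (auto intro!: tendsto_eq_intros t simp: L)
  have e4: "eventually (\<lambda>\<delta>. 1 - (1 + 22 * Q) * \<delta>^2 - (1 + a * \<delta>^2) * \<delta> > 0) (at_right 0)"
    by (rule ev_pos[where l=1]) (auto intro!: tendsto_eq_intros t)
  have e5: "eventually (\<lambda>\<delta>. 1 - \<delta>^2 - 1 / L - 2 * (a + b + 1) * \<delta> > 0) (at_right 0)"
    by (rule ev_pos[where l="1 - 1 / L"]) (auto intro!: tendsto_eq_intros t simp: L0')
  have e6: "eventually (\<lambda>\<delta>. L - 1 - a * \<delta>^2 - 2 * b * \<delta> > 0) (at_right 0)"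
    by (rule ev_pos[where l="L - 1"]) (auto intro!: tendsto_eq_intros t simp: L)
  have e7: "eventually (\<lambda>\<delta>. 1 - \<delta>^2 - 1 / L > 0) (at_right 0)"
    by (rule ev_pos[where l="1 - 1 / L"]) (auto intro!: tendsto_eq_intros t simp: L0')
  have e0: "eventually (\<lambda>\<delta>. \<delta> \<in> {0<..<1/2}) (at_right (0::real))"
    by (rule eventually_at_right_real) simp
  have "eventually (\<lambda>\<delta>. \<delta> \<in> {0<..<1/2} \<and> 1 - \<delta>^2 - 22 * Q * \<delta>^2 > 0
     \<and> 1 - (1 + 22 * Q) * \<delta>^2 - 1 / L0 > 0 \<and> L - 1 - a * \<delta>^2 > 0
     \<and> 1 - (1 + 22 * Q) * \<delta>^2 - (1 + a * \<delta>^2) * \<delta> > 0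
     \<and> 1 - \<delta>^2 - 1 / L - 2 * (a + b + 1) * \<delta> > 0
     \<and> L - 1 - a * \<delta>^2 - 2 * b * \<delta> > 0 \<and> 1 - \<delta>^2 - 1 / L > 0) (at_right 0)"
    using e0 e1 e2 e3 e4 e5 e6 e7 by eventually_elim blast
  then obtain \<delta> where "\<delta> \<in> {0<..<1/2} \<and> 1 - \<delta>^2 - 22 * Q * \<delta>^2 > 0
     \<and> 1 - (1 + 22 * Q) * \<delta>^2 - 1 / L0 > 0 \<and> L - 1 - a * \<delta>^2 > 0
     \<and> 1 - (1 + 22 * Q) * \<delta>^2 - (1 + a * \<delta>^2) * \<delta> > 0
     \<and> 1 - \<delta>^2 - 1 / L - 2 * (a + b + 1) * \<delta> > 0
     \<and> L - 1 - a * \<delta>^2 - 2 * b * \<delta> > 0 \<and> 1 - \<delta>^2 - 1 / L > 0"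
    using eventually_happens' trivial_limit_at_right_real by blast
  thus ?thesis by (intro exI[of _ \<delta>]) auto
qed

lemma L3:
  assumes ms: "Metric_space X d" and R0: "R \<ge> 0" and rg: "rough_geodesic_space X d R"
    and ap: "approximates_ngons X d"
  shows "\<forall>L>1. \<forall>B. \<exists>c f. c > 0 \<and> quasi_isometric_embedding (circle_pts c) (circle_dist c) X d L (4 * R) f \<and> \<not> c \<le> B"
proof (intro allI impI)
  fix L B :: real assume L: "L > 1"
  define L0 where "L0 = sqrt L"
  have L0: "L0 > 1" "L0 * L0 = L" using L by (auto simp: L0_def)
  define Q where "Q = L0 / (L0 - 1)"
  have Q0: "Q > 0" using L0 by (simp add: Q_def)
  define a where "a = 4 + 11 * Q"
  define b where "b = 11 * Q + 2"
  have ab: "a \<ge> 0" "b \<ge> 0" using Q0 by (auto simp: a_def b_def)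
  obtain \<delta> where d0: "0 < \<delta>" "\<delta> \<le> 1/2" and c1: "1 - \<delta>^2 - 22 * Q * \<delta>^2 > 0"
     and c2: "1 - (1 + 22 * Q) * \<delta>^2 - 1 / L0 > 0" and c3: "L - 1 - a * \<delta>^2 > 0"
     and c4: "1 - (1 + 22 * Q) * \<delta>^2 - (1 + a * \<delta>^2) * \<delta> > 0"
     and c5: "1 - \<delta>^2 - 1 / L - 2 * (a + b + 1) * \<delta> > 0"
     and c6: "L - 1 - a * \<delta>^2 - 2 * b * \<delta> > 0" and c7: "1 - \<delta>^2 - 1 / L > 0"
    using choose_delta[OF L L0(1), of Q a b] by blast
  define \<epsilon> where "\<epsilon> = \<delta>^2"
  have "\<delta> * \<delta> \<le> 1 * 1" using d0 by (intro mult_mono) auto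
  hence e0: "\<epsilon> > 0" "\<epsilon> \<le> 1" using d0 unfolding \<epsilon>_def by (auto simp: power2_eq_square)
  note c1' = c1[folded \<epsilon>_def] and c2' = c2[folded \<epsilon>_def] and c3' = c3[folded \<epsilon>_def]
    and c4' = c4[folded \<epsilon>_def] and c5' = c5[folded \<epsilon>_def] and c6' = c6[folded \<epsilon>_def]
  have de: "\<delta> * \<delta> = \<epsilon>" unfolding \<epsilon>_def by (simp add: power2_eq_square)
  define K where "K = 1 + \<epsilon>"
  have K1: "K > 1" using e0 by (simp add: K_def)
  define W where "W = 4 + 2 * a + 2 * b"
  define gL where "gL = 1 - \<epsilon> - 1 / L"
  have gL0: "gL > 0" using c7 unfolding gL_def \<epsilon>_def .
  define n :: nat where "n = nat \<lceil>2 * W / gL\<rceil> + 6"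
  have n6: "n \<ge> 6" by (simp add: n_def)
  have ngL: "real n * gL \<ge> 2 * W"
  proof -
    have "real n \<ge> 2 * W / gL" unfolding n_def by linarith
    thus ?thesis using gL0 by (simp add: divide_le_eq)
  qed
  obtain lam f where lamL: "lam > max (max B 0) (R / \<epsilon>)"
    and bf: "bilipschitz_embedding (cycle_verts n) (scaled_cycle_dist lam n) X d K f"
    using ap K1 n6 unfolding approximates_ngons_def by (meson order_trans le_add2 numeral_le_iff semiring_norm(69) n6 one_le_numeral)
  have lam0: "lam > 0" using lamL by simp
  have Rl: "R \<le> \<epsilon> * lam"
  proof -
    have "R / \<epsilon> < lam" using lamL by simp
    thus ?thesis using e0 by (simp add: divide_less_eq mult.commute)
  qed
  define rh where "rh = (2 * lam * (K - 1 / K) + 5 * R) * L0 / (L0 - 1)"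
  have Kinv: "1 / K \<ge> 1 - \<epsilon>"
  proof -
    have "(1 - \<epsilon>) * K = 1 - \<epsilon> * \<epsilon>" unfolding K_def by (simp add: algebra_simps)
    also have "\<dots> \<le> 1" using e0 by simp
    finally show ?thesis using K1 by (simp add: le_divide_eq)
  qed
  have KK: "K - 1 / K \<le> 3 * \<epsilon>"
  proof -
    have "K - 1 / K \<le> K - (1 - \<epsilon>)" using Kinv by simp
    thus ?thesis using e0 unfolding K_def by linarith
  qed
  have KK0: "K - 1 / K \<ge> 0" using K1 by (simp add: field_simps) (metis less_1_mult less_imp_le K1)
  have rh0: "rh \<ge> 0" unfolding rh_def using KK0 lam0 R0 L0 by (intro divide_nonneg_pos mult_nonneg_nonneg) auto
  have rhb: "rh \<le> 11 * Q * \<epsilon> * lam"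
  proof -
    have "2 * lam * (K - 1 / K) \<le> 2 * lam * (3 * \<epsilon>)" using KK lam0 by (intro mult_left_mono) auto
    hence "2 * lam * (K - 1 / K) + 5 * R \<le> 11 * \<epsilon> * lam" using Rl by simp
    hence "(2 * lam * (K - 1 / K) + 5 * R) * Q \<le> (11 * \<epsilon> * lam) * Q" using Q0 by (intro mult_right_mono) auto
    moreover have "rh = (2 * lam * (K - 1 / K) + 5 * R) * Q" unfolding rh_def Q_def by simp
    ultimately show ?thesis by (simp add: algebra_simps)
  qed
  define S where "S = (K * lam + rh + 3 * R) / lam"
  have Sb: "S \<le> 1 + a * \<epsilon>"
  proof -
    have "K * lam + rh + 3 * R \<le> (1 + a * \<epsilon>) * lam" using rhb Rl unfolding K_def a_def by (simp add: algebra_simps)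
    thus ?thesis unfolding S_def using lam0 by (simp add: divide_le_eq)
  qed
  have S1: "S \<ge> 1"
  proof -
    have "1 * lam \<le> K * lam" using K1 lam0 by (intro mult_right_mono) auto
    hence "lam \<le> K * lam + rh + 3 * R" using rh0 R0 by linarith
    thus ?thesis unfolding S_def using lam0 by (simp add: le_divide_eq)
  qed
  have lK: "lam / K \<ge> (1 - \<epsilon>) * lam" using Kinv lam0 by (simp add: mult_right_mono divide_inverse mult.commute)
  have rr: "rh + 2 * R \<le> b * \<epsilon> * lam" using rhb Rl unfolding b_def by (simp add: algebra_simps)
  have big: "lam / K > 2 * rh"
  proof -
    have "2 * rh \<le> 22 * Q * \<epsilon> * lam" using rhb by simp
    also have "\<dots> < (1 - \<epsilon>) * lam"
    proof -
      have "0 < (1 - \<epsilon> - 22 * Q * \<epsilon>) * lam" using c1' lam0 by simp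
      thus ?thesis by (simp add: algebra_simps)
    qed
    finally show ?thesis using lK by simp
  qed
  have A1: "(lam / K - 2 * rh) / lam \<ge> L0 / L"
  proof -
    have "L0 / L = 1 / L0" using L0 L by (simp add: field_simps)
    moreover have "(1 / L0) * lam \<le> lam / K - 2 * rh"
    proof -
      have "(1 / L0) * lam \<le> (1 - (1 + 22 * Q) * \<epsilon>) * lam" using c2' lam0 by (intro mult_right_mono) auto
      also have "\<dots> = (1 - \<epsilon>) * lam - 22 * Q * \<epsilon> * lam" by (simp add: algebra_simps)
      also have "\<dots> \<le> lam / K - 2 * rh" using lK rhb by simp
      finally show ?thesis .
    qed
    ultimately show ?thesis using lam0 by (simp add: le_divide_eq)
  qed
  have A2: "(K * lam + rh + 3 * R) / lam \<le> L" using Sb c3' unfolding S_def by simp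
  have A3: "(K * lam + rh + 3 * R) / lam * (\<delta> * lam) \<le> lam / K - 2 * rh"
  proof -
    have "S * (\<delta> * lam) \<le> (1 + a * \<epsilon>) * (\<delta> * lam)" using Sb d0 lam0 by (intro mult_right_mono) auto
    also have "\<dots> \<le> (1 - (1 + 22 * Q) * \<epsilon>) * lam"
    proof -
      have "(1 + a * \<epsilon>) * \<delta> \<le> 1 - (1 + 22 * Q) * \<epsilon>" using c4' by simp
      hence "((1 + a * \<epsilon>) * \<delta>) * lam \<le> (1 - (1 + 22 * Q) * \<epsilon>) * lam" using lam0 by (intro mult_right_mono) auto
      thus ?thesis by (simp add: algebra_simps)
    qed
    also have "\<dots> \<le> lam / K - 2 * rh" using lK rhb by (simp add: algebra_simps)
    finally show ?thesis unfolding S_def .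
  qed
  have A4: "(\<delta> * lam) * (1 / K - 1 / L) \<ge> 2 * lam * ((K * lam + rh + 3 * R) / lam - 1 / K) + 2 * (rh + 2 * R)"
  proof -
    have "2 * lam * (S - 1 / K) + 2 * (rh + 2 * R) \<le> 2 * lam * ((a + 1) * \<epsilon>) + 2 * (b * \<epsilon> * lam)"
    proof -
      have "S - 1 / K \<le> (a + 1) * \<epsilon>" using Sb Kinv by (simp add: algebra_simps)
      hence "2 * lam * (S - 1 / K) \<le> 2 * lam * ((a + 1) * \<epsilon>)" using lam0 by (intro mult_left_mono) auto
      thus ?thesis using rr by simp
    qed
    also have "\<dots> = (\<delta> * lam) * (2 * (a + b + 1) * \<delta>)" unfolding de[symmetric] by (simp add: algebra_simps)
    also have "\<dots> \<le> (\<delta> * lam) * (1 - \<epsilon> - 1 / L)" using c5' d0 lam0 by (intro mult_left_mono) auto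
    also have "\<dots> \<le> (\<delta> * lam) * (1 / K - 1 / L)" using Kinv d0 lam0 by (intro mult_left_mono) auto
    finally show ?thesis unfolding S_def .
  qed
  have A5: "(L - (K * lam + rh + 3 * R) / lam) * (\<delta> * lam) \<ge> 2 * (rh + 2 * R)"
  proof -
    have "2 * (rh + 2 * R) \<le> 2 * (b * \<epsilon> * lam)" using rr by simp
    also have "\<dots> = (2 * b * \<delta>) * (\<delta> * lam)" unfolding de[symmetric] by (simp add: algebra_simps)
    also have "\<dots> \<le> (L - 1 - a * \<epsilon>) * (\<delta> * lam)" using c6' d0 lam0 by (intro mult_right_mono) auto
    also have "\<dots> \<le> (L - S) * (\<delta> * lam)" using Sb d0 lam0 by (intro mult_right_mono) auto
    finally show ?thesis unfolding S_def .
  qed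
  have A6: "lam * (real n / 2 - 2) / K - 2 * lam * ((K * lam + rh + 3 * R) / lam) - 2 * (rh + 2 * R) \<ge> real n * lam / (2 * L)"
  proof -
    have n2: "real n / 2 - 2 \<ge> 0" using n6 by simp
    have "lam * (real n / 2 - 2) / K = (lam * (real n / 2 - 2)) * (1 / K)" by simp
    also have "\<dots> \<ge> (lam * (real n / 2 - 2)) * (1 - \<epsilon>)" using Kinv n2 lam0 by (intro mult_left_mono) auto
    finally have t1: "lam * (real n / 2 - 2) / K \<ge> lam * ((real n / 2 - 2) * (1 - \<epsilon>))" by (simp add: algebra_simps)
    have "(2 * lam) * S \<le> (2 * lam) * (1 + a * \<epsilon>)" using Sb lam0 by (intro mult_left_mono) auto
    hence t2: "2 * lam * S \<le> lam * (2 * (1 + a * \<epsilon>))" by (simp add: algebra_simps)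
    have t3: "2 * (rh + 2 * R) \<le> lam * (2 * b * \<epsilon>)" using rr by (simp add: algebra_simps)
    have key: "(real n / 2 - 2) * (1 - \<epsilon>) - 2 * (1 + a * \<epsilon>) - 2 * b * \<epsilon> \<ge> real n / (2 * L)"
    proof -
      have f1: "real n / 2 * gL \<ge> W" using ngL by simp
      have f2: "real n / 2 * gL = real n / 2 * (1 - \<epsilon>) - real n / (2 * L)" unfolding gL_def by (simp add: algebra_simps)
      have f3: "(real n / 2 - 2) * (1 - \<epsilon>) = real n / 2 * (1 - \<epsilon>) - 2 + 2 * \<epsilon>" by (simp add: algebra_simps)
      have f4: "2 * (1 + a * \<epsilon>) = 2 + 2 * (a * \<epsilon>)" "2 * b * \<epsilon> = 2 * (b * \<epsilon>)" by simp_all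
      have f5: "a * \<epsilon> \<le> a * 1" "b * \<epsilon> \<le> b * 1" using ab e0 by (intro mult_left_mono; simp)+
      show ?thesis using f1 f2 f3 f4 f5 e0 unfolding W_def by linarith
    qed
    have "lam * (real n / (2 * L)) \<le> lam * ((real n / 2 - 2) * (1 - \<epsilon>) - 2 * (1 + a * \<epsilon>) - 2 * b * \<epsilon>)"
      using key lam0 by (intro mult_left_mono) auto
    hence "real n * lam / (2 * L) \<le> lam * ((real n / 2 - 2) * (1 - \<epsilon>)) - lam * (2 * (1 + a * \<epsilon>)) - lam * (2 * b * \<epsilon>)"
      by (simp add: algebra_simps)
    thus ?thesis using t1 t2 t3 unfolding S_def by linarith
  qed
  have PQ: "polyQ X d R lam K n f L0"
  proof (intro polyQ.intro polyP.intro polyQ_axioms.intro polyP_axioms.intro ms)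
    show "R \<ge> 0" "rough_geodesic_space X d R" "K > 1" "lam > 0" "n \<ge> 2" using R0 rg K1 lam0 n6 by auto
    show "bilipschitz_embedding (cycle_verts n) (scaled_cycle_dist lam n) X d K f" by (rule bf)
    show "L0 > 1" "n \<ge> 4" using L0 n6 by auto
  qed
  have rhe: "polyQ.rho R lam K L0 = rh" unfolding rh_def by (rule polyQ.rho_def[OF PQ])
  interpret P3: polyQ3 X d R lam K n f L0 L "\<delta> * lam"
  proof (intro polyQ3.intro polyQ2.intro PQ polyQ3_axioms.intro polyQ2_axioms.intro)
    show "n \<ge> 6" "\<delta> * lam > 0" using n6 d0 lam0 by auto
    show "lam / K > 2 * polyQ.rho R lam K L0" using big rhe by simp
    show "(lam / K - 2 * polyQ.rho R lam K L0) / lam \<ge> L0 / L" using A1 rhe by simp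
    show "(K * lam + polyQ.rho R lam K L0 + 3 * R) / lam \<le> L" using A2 rhe by simp
    show "(K * lam + polyQ.rho R lam K L0 + 3 * R) / lam * (\<delta> * lam) \<le> lam / K - 2 * polyQ.rho R lam K L0"
      using A3 rhe by simp
    show "\<delta> * lam * (1 / K - 1 / L) \<ge> 2 * lam * ((K * lam + polyQ.rho R lam K L0 + 3 * R) / lam - 1 / K)
        + 2 * (polyQ.rho R lam K L0 + 2 * R)" using A4 rhe by simp
    show "(L - (K * lam + polyQ.rho R lam K L0 + 3 * R) / lam) * (\<delta> * lam) \<ge> 2 * (polyQ.rho R lam K L0 + 2 * R)"
      using A5 rhe by simp
    show "lam * (real n / 2 - 2) / K - 2 * lam * ((K * lam + polyQ.rho R lam K L0 + 3 * R) / lam)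
        - 2 * (polyQ.rho R lam K L0 + 2 * R) \<ge> real n * lam / (2 * L)" using A6 rhe by simp
  qed
  have "1 * lam \<le> real n * lam" using n6 lam0 by (intro mult_right_mono) auto
  moreover have "B < lam" using lamL by simp
  ultimately have cB: "\<not> real n * lam \<le> B" by linarith
  show "\<exists>c f. c > 0 \<and> quasi_isometric_embedding (circle_pts c) (circle_dist c) X d L (4 * R) f \<and> \<not> c \<le> B"
    using P3.QI cB lam0 n6 by (intro exI[of _ "real n * lam"] exI[of _ P3.Fm]) auto
qed

theorem corollary3p11:
  fixes X :: "'a set" and d :: "'a \<Rightarrow> 'a \<Rightarrow> real" and R :: real
  assumes "R \<ge> 0"
    and "Metric_space X d"
    and "rough_geodesic_space X d R"
  shows "(strongly_shortcut X d R \<longleftrightarrow>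
           (\<exists>L>1. \<exists>B. \<forall>c f. c > 0 \<and>
              quasi_isometric_embedding (circle_pts c) (circle_dist c) X d L (4 * R) f \<longrightarrow> c \<le> B))
       \<and> (strongly_shortcut X d R \<longleftrightarrow>
           (\<exists>L>1. \<forall>C\<ge>0. \<exists>B. \<forall>c f. c > 0 \<and>
              quasi_isometric_embedding (circle_pts c) (circle_dist c) X d L C f \<longrightarrow> c \<le> B))
       \<and> (strongly_shortcut X d R \<longleftrightarrow> \<not> approximates_ngons X d)
       \<and> (strongly_shortcut X d R \<longleftrightarrow> \<not> cone_contains_unit_circle X d)"
proof -
  note R0 = assms(1) and ms = assms(2) and rg = assms(3)
  let ?SS = "strongly_shortcut X d R"
  let ?QI = "\<lambda>L C c f. quasi_isometric_embedding (circle_pts c) (circle_dist c) X d L C f"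
  have l1: "\<not> ?SS \<Longrightarrow> cone_contains_unit_circle X d" using L1[OF ms R0] by blast
  have l2: "cone_contains_unit_circle X d \<Longrightarrow> approximates_ngons X d" using L2[OF ms] by blast
  have l3: "approximates_ngons X d \<Longrightarrow> \<forall>L>1. \<forall>B. \<exists>c f. c > 0 \<and> ?QI L (4 * R) c f \<and> \<not> c \<le> B"
    using L3[OF ms R0 rg] by blast
  have l4: "(\<forall>L>1. \<exists>C\<ge>0. \<forall>B. \<exists>c f. c > 0 \<and> ?QI L C c f \<and> \<not> c \<le> B) \<Longrightarrow> approximates_ngons X d"
    using L4[OF ms] by blast
  have l5: "approximates_ngons X d \<Longrightarrow> \<not> ?SS" using L5[OF ms R0 rg] by blast
  have e1: "?SS \<longleftrightarrow> (\<exists>L>1. \<exists>B. \<forall>c f. c > 0 \<and> ?QI L (4 * R) c f \<longrightarrow> c \<le> B)"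
  proof
    assume ss: ?SS
    show "\<exists>L>1. \<exists>B. \<forall>c f. c > 0 \<and> ?QI L (4 * R) c f \<longrightarrow> c \<le> B"
    proof (rule ccontr)
      assume "\<not> (\<exists>L>1. \<exists>B. \<forall>c f. c > 0 \<and> ?QI L (4 * R) c f \<longrightarrow> c \<le> B)"
      hence "\<forall>L>1. \<exists>C\<ge>0. \<forall>B. \<exists>c f. c > 0 \<and> ?QI L C c f \<and> \<not> c \<le> B"
        using R0 by (metis mult_nonneg_nonneg zero_le_numeral)
      thus False using l4 l5 ss by blast
    qed
  next
    assume h: "\<exists>L>1. \<exists>B. \<forall>c f. c > 0 \<and> ?QI L (4 * R) c f \<longrightarrow> c \<le> B"
    show ?SS
    proof (rule ccontr)
      assume "\<not> ?SS"
      hence "\<forall>L>1. \<forall>B. \<exists>c f. c > 0 \<and> ?QI L (4 * R) c f \<and> \<not> c \<le> B" using l1 l2 l3 by blast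
      thus False using h by blast
    qed
  qed
  have e2: "?SS \<longleftrightarrow> (\<exists>L>1. \<forall>C\<ge>0. \<exists>B. \<forall>c f. c > 0 \<and> ?QI L C c f \<longrightarrow> c \<le> B)"
  proof
    assume ss: ?SS
    show "\<exists>L>1. \<forall>C\<ge>0. \<exists>B. \<forall>c f. c > 0 \<and> ?QI L C c f \<longrightarrow> c \<le> B"
    proof (rule ccontr)
      assume "\<not> (\<exists>L>1. \<forall>C\<ge>0. \<exists>B. \<forall>c f. c > 0 \<and> ?QI L C c f \<longrightarrow> c \<le> B)"
      hence "\<forall>L>1. \<exists>C\<ge>0. \<forall>B. \<exists>c f. c > 0 \<and> ?QI L C c f \<and> \<not> c \<le> B" by blast
      thus False using l4 l5 ss by blast
    qed
  next
    assume h: "\<exists>L>1. \<forall>C\<ge>0. \<exists>B. \<forall>c f. c > 0 \<and> ?QI L C c f \<longrightarrow> c \<le> B"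
    show ?SS
    proof (rule ccontr)
      assume "\<not> ?SS"
      hence H: "\<forall>L>1. \<forall>B. \<exists>c f. c > 0 \<and> ?QI L (4 * R) c f \<and> \<not> c \<le> B" using l1 l2 l3 by blast
      obtain L where L: "L > 1" and hL: "\<forall>C\<ge>0. \<exists>B. \<forall>c f. c > 0 \<and> ?QI L C c f \<longrightarrow> c \<le> B" using h by blast
      have "4 * R \<ge> 0" using R0 by simp
      then obtain B where "\<forall>c f. c > 0 \<and> ?QI L (4 * R) c f \<longrightarrow> c \<le> B" using hL by blast
      thus False using H L by blast
    qed
  qed
  have e3: "?SS \<longleftrightarrow> \<not> approximates_ngons X d" using l1 l2 l5 by blast
  have e4: "?SS \<longleftrightarrow> \<not> cone_contains_unit_circle X d" using l1 l2 l5 by blast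
  show ?thesis using e1 e2 e3 e4 by blast
qed

end
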